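(* A partial order is unary FA-presentable if and only if it is isomorphic to one obtained by propagating a unary FA-foundational partial order $(Q,\le)$ in which every seed $P_k=\{p^{(k)}_1,\dots,p^{(k)}_5\}$ is either an anti-chain (no two distinct $p^{(k)}_i$ comparable), an ascending chain ($p^{(k)}_1<p^{(k)}_2<p^{(k)}_3<p^{(k)}_4<p^{(k)}_5$), or a descending chain ($p^{(k)}_1>p^{(k)}_2>p^{(k)}_3>p^{(k)}_4>p^{(k)}_5$).
   Context: A structure is unary FA-presentable if there exist a regular language $L\subseteq a^*$ and a surjection $\phi:L\to X$ such that for equality and for the relation, the set of pairs $(u,v)\in L^2$ whose images are related is regular (i.e. the set of words $\mathrm{conv}(u,v)$ over $\{a,\$\}^2$, reading both words in parallel with the shorter padded by $\$$, is a regular language). A unary FA-foundational binary relation is a finite set $Q$ with a relation $\rho$ and pairwise disjoint five-element subsets (seeds) $P_k=\{p^{(k)}_1,\dots,p^{(k)}_5\}$, $0\le k\le n-1$ ($n\ge0$), such that with $Q'=Q\setminus\bigcup_k P_k$, for all $k,l$ (possibly equal) and $q\in Q'$: (1) the statements $p^{(k)}_i\rho p^{(l)}_i$ ($1\le i\le5$) are all true or all false; (2) the statements $p^{(k)}_i\rho p^{(l)}_{i+1}$ ($1\le i\le4$) are all true or all false; (3) the statements $p^{(k)}_{i+1}\rho p^{(l)}_i$ ($1\le i\le 4$) are all true or all false; (4) the statements $p^{(k)}_i\rho p^{(l)}_j$ with $j-i\ge2$ are all true or all false; (5) the statements $p^{(k)}_j\rho p^{(l)}_i$ with $j-i\ge2$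 are all true or all false; (6) the statements $q\rho p^{(k)}_i$ ($2\le i\le5$) are all true or all false; (7) the statements $p^{(k)}_i\rho q$ ($2\le i\le 5$) are all true or all false. A unary FA-foundational partial order is one in which $\rho$ is a partial order on $Q$. Propagation yields $(\hat Q,\hat\rho)$ with $\hat Q=Q'\cup\{p^{(k)}_i:0\le k<n,\ i\in\mathbb{N}\}$ ($\mathbb{N}=\{1,2,\dots\}$, new elements for $i\ge6$) and: $\hat\rho=\rho$ on $Q'$; $p^{(k)}_i\hat\rho p^{(l)}_j$ iff [$j=i$ and $p^{(k)}_1\rho p^{(l)}_1$] or [$j=i+1$ and $p^{(k)}_1\rho p^{(l)}_2$] or [$j=i-1$ and $p^{(k)}_2\rho p^{(l)}_1$] or [$j\ge i+2$ and $p^{(k)}_1\rho p^{(l)}_3$] or [$j\le i-2$ and $p^{(k)}_3\rho p^{(l)}_1$]; for $q\in Q'$: $q\hat\rho p^{(k)}_1$ iff $q\rho p^{(k)}_1$, $q\hat\rho p^{(k)}_i$ ($i\ge2$) iff $q\rho p^{(k)}_2$, $p^{(k)}_1\hat\rho q$ iff $p^{(k)}_1\rho q$, $p^{(k)}_i\hat\rho q$ ($i\ge2$) iff $p^{(k)}_2\rho q$. *)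

theory Defs
  imports Main
begin

definition regular :: "'s list set \<Rightarrow> bool" where
  "regular L \<longleftrightarrow>
     (\<exists>(S::nat set) s0 (\<delta>::nat \<Rightarrow> 's \<Rightarrow> nat) F.
        finite S \<and> s0 \<in> S \<and> (\<forall>s\<in>S. \<forall>x. \<delta> s x \<in> S) \<and>
        L = {w. foldl \<delta> s0 w \<in> F})"

text \<open>Unary words a^m are identified with their length m.\<close>
definition unary_word :: "nat \<Rightarrow> unit list" where
  "unary_word m = replicate m ()"

definition regular_unary :: "nat set \<Rightarrow> bool" where
  "regular_unary L \<longleftrightarrow> regular (unary_word ` L)"

text \<open>Convolution of a^m and a^n over the alphabet {a,\$}^2; the letter a is coded
  by True and the padding symbol \$ by False.\<close>
definition conv :: "nat \<Rightarrow> nat \<Rightarrow> (bool \<times> bool) list" where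
  "conv m n = map (\<lambda>i. (i < m, i < n)) [0..<max m n]"

definition unary_FA_presentable :: "'a set \<Rightarrow> ('a \<times> 'a) set \<Rightarrow> bool" where
  "unary_FA_presentable X R \<longleftrightarrow>
     (\<exists>(L::nat set) (\<phi>::nat \<Rightarrow> 'a).
        regular_unary L \<and> \<phi> ` L = X \<and>
        regular {conv u v | u v. u \<in> L \<and> v \<in> L \<and> \<phi> u = \<phi> v} \<and>
        regular {conv u v | u v. u \<in> L \<and> v \<in> L \<and> (\<phi> u, \<phi> v) \<in> R})"

text \<open>The finite set Q (w.l.o.g. a set of naturals), relation rho, n seeds;
  p k i is the element p^(k)_i for k < n and 1 \<le> i \<le> 5.\<close>

definition seed_set :: "nat \<Rightarrow> (nat \<Rightarrow> nat \<Rightarrow> nat) \<Rightarrow> nat set" where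
  "seed_set n p = (\<lambda>(k,i). p k i) ` ({..<n} \<times> {1..5})"

definition unary_FA_foundational ::
  "nat set \<Rightarrow> (nat \<times> nat) set \<Rightarrow> nat \<Rightarrow> (nat \<Rightarrow> nat \<Rightarrow> nat) \<Rightarrow> bool" where
  "unary_FA_foundational Q \<rho> n p \<longleftrightarrow>
     finite Q \<and> \<rho> \<subseteq> Q \<times> Q \<and>
     seed_set n p \<subseteq> Q \<and>
     inj_on (\<lambda>(k,i). p k i) ({..<n} \<times> {1..5}) \<and>
     (\<forall>k<n. \<forall>l<n.
        (\<forall>i\<in>{1..5}. \<forall>j\<in>{1..5}. (p k i, p l i) \<in> \<rho> \<longleftrightarrow> (p k j, p l j) \<in> \<rho>) \<and>
        (\<forall>i\<in>{1..4}. \<forall>j\<in>{1..4}. (p k i, p l (i+1)) \<in> \<rho> \<longleftrightarrow> (p k j, p l (j+1)) \<in> \<rho>) \<and>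
        (\<forall>i\<in>{1..4}. \<forall>j\<in>{1..4}. (p k (i+1), p l i) \<in> \<rho> \<longleftrightarrow> (p k (j+1), p l j) \<in> \<rho>) \<and>
        (\<forall>i j i' j'. 1 \<le> i \<and> i + 2 \<le> j \<and> j \<le> 5 \<and> 1 \<le> i' \<and> i' + 2 \<le> j' \<and> j' \<le> 5 \<longrightarrow>
           ((p k i, p l j) \<in> \<rho> \<longleftrightarrow> (p k i', p l j') \<in> \<rho>)) \<and>
        (\<forall>i j i' j'. 1 \<le> i \<and> i + 2 \<le> j \<and> j \<le> 5 \<and> 1 \<le> i' \<and> i' + 2 \<le> j' \<and> j' \<le> 5 \<longrightarrow>
           ((p k j, p l i) \<in> \<rho> \<longleftrightarrow> (p k j', p l i') \<in> \<rho>))) \<and>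
     (\<forall>k<n. \<forall>q\<in>Q - seed_set n p.
        (\<forall>i\<in>{2..5}. \<forall>j\<in>{2..5}. (q, p k i) \<in> \<rho> \<longleftrightarrow> (q, p k j) \<in> \<rho>) \<and>
        (\<forall>i\<in>{2..5}. \<forall>j\<in>{2..5}. (p k i, q) \<in> \<rho> \<longleftrightarrow> (p k j, q) \<in> \<rho>))"

definition unary_FA_foundational_po ::
  "nat set \<Rightarrow> (nat \<times> nat) set \<Rightarrow> nat \<Rightarrow> (nat \<Rightarrow> nat \<Rightarrow> nat) \<Rightarrow> bool" where
  "unary_FA_foundational_po Q \<rho> n p \<longleftrightarrow>
     unary_FA_foundational Q \<rho> n p \<and> partial_order_on Q \<rho>"

definition seed_antichain :: "(nat \<times> nat) set \<Rightarrow> (nat \<Rightarrow> nat \<Rightarrow> nat) \<Rightarrow> nat \<Rightarrow> bool" where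
  "seed_antichain \<rho> p k \<longleftrightarrow>
     (\<forall>i\<in>{1..5}. \<forall>j\<in>{1..5}. p k i \<noteq> p k j \<longrightarrow> (p k i, p k j) \<notin> \<rho>)"

definition seed_ascending :: "(nat \<times> nat) set \<Rightarrow> (nat \<Rightarrow> nat \<Rightarrow> nat) \<Rightarrow> nat \<Rightarrow> bool" where
  "seed_ascending \<rho> p k \<longleftrightarrow>
     (\<forall>i\<in>{1..4}. (p k i, p k (i+1)) \<in> \<rho> \<and> p k i \<noteq> p k (i+1))"

definition seed_descending :: "(nat \<times> nat) set \<Rightarrow> (nat \<Rightarrow> nat \<Rightarrow> nat) \<Rightarrow> nat \<Rightarrow> bool" where
  "seed_descending \<rho> p k \<longleftrightarrow>
     (\<forall>i\<in>{1..4}. (p k (i+1), p k i) \<in> \<rho> \<and> p k i \<noteq> p k (i+1))"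

text \<open>Elements of the propagated structure: Inl q for q \<in> Q', Inr (k,i) for p^(k)_i, i \<ge> 1.\<close>
definition prop_carrier :: "nat set \<Rightarrow> nat \<Rightarrow> (nat \<Rightarrow> nat \<Rightarrow> nat) \<Rightarrow> (nat + nat \<times> nat) set" where
  "prop_carrier Q n p = Inl ` (Q - seed_set n p) \<union> Inr ` {(k,i). k < n \<and> 1 \<le> i}"

definition prop_seed_rel :: "(nat \<times> nat) set \<Rightarrow> (nat \<Rightarrow> nat \<Rightarrow> nat) \<Rightarrow> nat \<Rightarrow> nat \<Rightarrow> nat \<Rightarrow> nat \<Rightarrow> bool" where
  "prop_seed_rel \<rho> p k i l j \<longleftrightarrow>
     (j = i \<and> (p k 1, p l 1) \<in> \<rho>) \<or>
     (j = i + 1 \<and> (p k 1, p l 2) \<in> \<rho>) \<or>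
     (i = j + 1 \<and> (p k 2, p l 1) \<in> \<rho>) \<or>
     (i + 2 \<le> j \<and> (p k 1, p l 3) \<in> \<rho>) \<or>
     (j + 2 \<le> i \<and> (p k 3, p l 1) \<in> \<rho>)"

definition prop_rel :: "nat set \<Rightarrow> (nat \<times> nat) set \<Rightarrow> nat \<Rightarrow> (nat \<Rightarrow> nat \<Rightarrow> nat)
    \<Rightarrow> ((nat + nat \<times> nat) \<times> (nat + nat \<times> nat)) set" where
  "prop_rel Q \<rho> n p =
     {(Inl q, Inl q') | q q'. q \<in> Q - seed_set n p \<and> q' \<in> Q - seed_set n p \<and> (q, q') \<in> \<rho>} \<union>
     {(Inr (k,i), Inr (l,j)) | k i l j. k < n \<and> l < n \<and> 1 \<le> i \<and> 1 \<le> j \<and> prop_seed_rel \<rho> p k i l j} \<union>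
     {(Inl q, Inr (k,i)) | q k i. q \<in> Q - seed_set n p \<and> k < n \<and> 1 \<le> i \<and>
        (if i = 1 then (q, p k 1) \<in> \<rho> else (q, p k 2) \<in> \<rho>)} \<union>
     {(Inr (k,i), Inl q) | q k i. q \<in> Q - seed_set n p \<and> k < n \<and> 1 \<le> i \<and>
        (if i = 1 then (p k 1, q) \<in> \<rho> else (p k 2, q) \<in> \<rho>)}"

definition rel_isomorphic :: "'a set \<Rightarrow> ('a \<times> 'a) set \<Rightarrow> 'b set \<Rightarrow> ('b \<times> 'b) set \<Rightarrow> bool" where
  "rel_isomorphic A R B S \<longleftrightarrow>
     (\<exists>f. bij_betw f A B \<and> (\<forall>x\<in>A. \<forall>y\<in>A. (x, y) \<in> R \<longleftrightarrow> (f x, f y) \<in> S))"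

end

theory Submission
  imports Defs "HOL-Library.FuncSet"
begin


lemma regular_by_automaton:
  fixes step :: "'q \<Rightarrow> 's \<Rightarrow> 'q"
  assumes fin: "finite A" and init: "q0 \<in> A" and cl: "\<And>q x. q \<in> A \<Longrightarrow> step q x \<in> A"
  shows "regular {w. acc (foldl step q0 w)}"
proof -
  obtain enc :: "'q \<Rightarrow> nat" where enc: "inj_on enc A"
    using fin by (metis finite_imp_inj_to_nat_seg)
  define dec where "dec = inv_into A enc"
  define \<delta> where "\<delta> s x = enc (step (dec s) x)" for s x
  have dec_enc: "dec (enc q) = q" if "q \<in> A" for q using enc that by (simp add: dec_def)
  have fold: "foldl \<delta> (enc q) w = enc (foldl step q w)" if "q \<in> A" for q w
    using that proof (induction w arbitrary: q)
    case Nil then show ?case by simp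
  next
    case (Cons x w) then show ?case by (simp add: \<delta>_def dec_enc cl)
  qed
  have inA: "foldl step q w \<in> A" if "q \<in> A" for q w
    using that by (induction w arbitrary: q) (auto intro: cl)
  define S where "S = enc ` A \<union> {enc q0}"
  have "finite S" using fin by (simp add: S_def)
  moreover have "enc q0 \<in> S" by (simp add: S_def)
  moreover have "\<forall>s\<in>S. \<forall>x. \<delta> s x \<in> S"
    using init by (auto simp: S_def \<delta>_def dec_enc cl)
  moreover have "{w. acc (foldl step q0 w)} = {w. foldl \<delta> (enc q0) w \<in> enc ` {q\<in>A. acc q}}"
  proof -
    have "foldl \<delta> (enc q0) w \<in> enc ` {q\<in>A. acc q} \<longleftrightarrow> acc (foldl step q0 w)" for w
      using fold[OF init, of w] inA[OF init, of w] enc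
      by (auto dest: inj_onD)
    then show ?thesis by auto
  qed
  ultimately show ?thesis unfolding regular_def by blast
qed

lemma funpow_period:
  fixes g :: "'b \<Rightarrow> 'b"
  assumes fin: "finite S" and cl: "\<And>s. s \<in> S \<Longrightarrow> g s \<in> S"
  shows "\<exists>T P. 0 < P \<and> (\<forall>s\<in>S. \<forall>m\<ge>T. \<forall>k. (g^^(m + k*P)) s = (g^^m) s)"
proof -
  have inS: "(g^^m) s \<in> S" if "s \<in> S" for s m
    using that by (induction m) (auto intro: cl)
  define F where "F m = restrict (g^^m) S" for m
  have "F ` UNIV \<subseteq> S \<rightarrow>\<^sub>E S" using inS by (auto simp: F_def)
  moreover have "finite (S \<rightarrow>\<^sub>E S)" using fin by (simp add: finite_PiE)
  ultimately have "finite (range F)" by (rule finite_subset)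
  hence "\<not> inj F" using infinite_UNIV_nat finite_imageD by blast
  then obtain a b where ab: "a \<noteq> b" "F a = F b" unfolding inj_def by blast
  then obtain a b where ab: "a < b" "F a = F b"
    by (metis linorder_neq_iff)
  have eq: "(g^^b) s = (g^^a) s" if "s \<in> S" for s
    using ab(2) that unfolding F_def by (metis restrict_apply')
  have step: "(g^^(m + (b-a))) s = (g^^m) s" if sS: "s \<in> S" and ma: "m \<ge> a" for s m
  proof -
    obtain j where j: "m = a + j" using ma le_Suc_ex by blast
    have "m + (b-a) = j + b" using j ab(1) by simp
    hence "(g^^(m + (b-a))) s = (g^^j) ((g^^b) s)" by (simp add: funpow_add)
    also have "\<dots> = (g^^j) ((g^^a) s)" using eq sS by simp
    also have "\<dots> = (g^^m) s" using j by (metis add.commute comp_apply funpow_add)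
    finally show ?thesis .
  qed
  have "(g^^(m + k*(b-a))) s = (g^^m) s" if "s \<in> S" "m \<ge> a" for s m k
  proof (induction k)
    case 0 then show ?case by simp
  next
    case (Suc k)
    have "m + Suc k*(b-a) = (m + k*(b-a)) + (b-a)" by simp
    hence "(g^^(m + Suc k*(b-a))) s = (g^^((m + k*(b-a)) + (b-a))) s" by metis
    also have "\<dots> = (g^^(m + k*(b-a))) s" using step that by simp
    finally show ?case using Suc by simp
  qed
  then show ?thesis using ab by (intro exI[of _ a] exI[of _ "b-a"]) auto
qed



lemma length_conv[simp]: "length (conv u v) = max u v"
  by (simp add: conv_def)

lemma conv_nth: "i < max u v \<Longrightarrow> conv u v ! i = (i<u, i<v)"
  by (simp add: conv_def)

lemma conv_inj: assumes "conv u v = conv u' v'" shows "u = u' \<and> v = v'"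
proof -
  have len: "max u v = max u' v'" using assms by (metis length_conv)
  have "u = u'"
  proof (rule ccontr)
    assume "u \<noteq> u'"
    then consider "u < u'" | "u' < u" by linarith
    then show False
    proof cases
      case 1
      then have "u < max u v" using len by simp
      then show False using assms conv_nth[of u u v] conv_nth[of u u' v'] len 1 by simp
    next
      case 2
      then have "u' < max u' v'" using len by simp
      then show False using assms conv_nth[of u' u v] conv_nth[of u' u' v'] len 2 by simp
    qed
  qed
  moreover have "v = v'"
  proof (rule ccontr)
    assume "v \<noteq> v'"
    then consider "v < v'" | "v' < v" by linarith
    then show False
    proof cases
      case 1
      then have "v < max u v" using len by simp
      then show False using assms conv_nth[of v u v] conv_nth[of v u' v'] len 1 by simp
    next
      case 2
      then have "v' < max u' v'" using len by simp
      then show False using assms conv_nth[of v' u v] conv_nth[of v' u' v'] len 2 by simp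
    qed
  qed
  ultimately show ?thesis by simp
qed

lemma conv_split: "conv u v = replicate (min u v) (True,True) @
   (if u \<le> v then replicate (v-u) (False,True) else replicate (u-v) (True,False))"
  by (rule nth_equalityI) (auto simp: conv_nth nth_append)

lemma foldl_replicate: "foldl f s (replicate n x) = ((\<lambda>s. f s x)^^n) s"
  by (induction n arbitrary: s) (simp_all add: funpow_Suc_right del: funpow.simps)

definition Per :: "nat \<Rightarrow> nat \<Rightarrow> (nat \<Rightarrow> nat \<Rightarrow> bool) \<Rightarrow> bool" where
  "Per T P h \<longleftrightarrow> 0 < P \<and>
     (\<forall>u v. T \<le> u \<longrightarrow> T \<le> v \<longrightarrow> h (u+P) (v+P) = h u v) \<and>
     (\<forall>u v. u + T \<le> v \<longrightarrow> h u (v+P) = h u v) \<and>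
     (\<forall>u v. v + T \<le> u \<longrightarrow> h (u+P) v = h u v)"

lemma regular_Per:
  assumes "regular K"
  shows "\<exists>T P. Per T P (\<lambda>u v. conv u v \<in> K)"
proof -
  obtain S :: "nat set" and s0 \<delta> F where S: "finite S" "s0 \<in> S" "\<forall>s\<in>S. \<forall>x. \<delta> s x \<in> S"
    and K: "K = {w. foldl \<delta> s0 w \<in> F}"
    using assms unfolding regular_def by blast
  define g1 where "g1 = (\<lambda>s. \<delta> s (True,True))"
  define g2 where "g2 = (\<lambda>s. \<delta> s (False,True))"
  define g3 where "g3 = (\<lambda>s. \<delta> s (True,False))"
  obtain T1 P1 where 1: "0 < P1" "\<forall>s\<in>S. \<forall>m\<ge>T1. \<forall>k. (g1^^(m + k*P1)) s = (g1^^m) s"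
    using funpow_period[OF S(1), of g1] S(3) by (auto simp: g1_def)
  obtain T2 P2 where 2: "0 < P2" "\<forall>s\<in>S. \<forall>m\<ge>T2. \<forall>k. (g2^^(m + k*P2)) s = (g2^^m) s"
    using funpow_period[OF S(1), of g2] S(3) by (auto simp: g2_def)
  obtain T3 P3 where 3: "0 < P3" "\<forall>s\<in>S. \<forall>m\<ge>T3. \<forall>k. (g3^^(m + k*P3)) s = (g3^^m) s"
    using funpow_period[OF S(1), of g3] S(3) by (auto simp: g3_def)
  define T where "T = Suc (max T1 (max T2 T3))"
  define P where "P = P1*P2*P3"
  have inS: "(g^^m) s \<in> S" if "s \<in> S" "\<And>s. s\<in>S \<Longrightarrow> g s \<in> S" for g s m
    using that by (induction m) auto
  have g1S: "(g1^^m) s0 \<in> S" for m using inS[of s0 g1] S by (auto simp: g1_def)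
  have fold: "foldl \<delta> s0 (conv u v) = (if u \<le> v then (g2^^(v-u)) ((g1^^(min u v)) s0)
      else (g3^^(u-v)) ((g1^^(min u v)) s0))" for u v
    by (simp add: conv_split foldl_replicate g1_def g2_def g3_def)
  have "Per T P (\<lambda>u v. conv u v \<in> K)"
    unfolding Per_def
  proof (intro conjI allI impI)
    show "0 < P" using 1 2 3 by (simp add: P_def)
  next
    fix u v assume u: "T \<le> u" and v: "T \<le> v"
    have e: "(g1^^(x + P)) s0 = (g1^^x) s0" if "T \<le> x" for x
    proof -
      have "(g1^^(x + (P2*P3)*P1)) s0 = (g1^^x) s0"
        using 1(2) S(2) that by (auto simp: T_def)
      then show ?thesis by (simp add: P_def mult.commute mult.left_commute)
    qed
    show "(conv (u+P) (v+P) \<in> K) = (conv u v \<in> K)"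
      unfolding K using u v by (simp add: fold e)
  next
    fix u v assume uv: "u + T \<le> v"
    have d: "v + P - u = (v - u) + (P1*P3)*P2" using uv by (simp add: P_def mult.commute mult.left_commute)
    have "(g2^^((v - u) + (P1*P3)*P2)) ((g1^^u) s0) = (g2^^(v-u)) ((g1^^u) s0)"
    proof -
      have "T2 \<le> v - u" using uv by (simp add: T_def)
      then show ?thesis using 2(2) g1S by blast
    qed
    then show "(conv u (v+P) \<in> K) = (conv u v \<in> K)"
      unfolding K using uv d by (simp add: fold)
  next
    fix u v assume uv: "v + T \<le> u"
    have d: "u + P - v = (u - v) + (P1*P2)*P3" using uv by (simp add: P_def mult.commute mult.left_commute)
    have "(g3^^((u - v) + (P1*P2)*P3)) ((g1^^v) s0) = (g3^^(u-v)) ((g1^^v) s0)"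
    proof -
      have "T3 \<le> u - v" using uv by (simp add: T_def)
      then show ?thesis using 3(2) g1S by blast
    qed
    moreover have "\<not> u + P \<le> v" "\<not> u \<le> v" using uv 1 2 3 by (auto simp: P_def T_def)
    ultimately show "(conv (u+P) v \<in> K) = (conv u v \<in> K)"
      unfolding K using uv d by (simp add: fold)
  qed
  then show ?thesis by blast
qed



lemma Per_shift: assumes "Per T P h" "T \<le> u" "T \<le> v" shows "h (u + k*P) (v + k*P) = h u v"
proof (induction k)
  case 0 then show ?case by simp
next
  case (Suc k)
  have "h (u + Suc k*P) (v + Suc k*P) = h ((u + k*P) + P) ((v + k*P) + P)" by (simp add: algebra_simps)
  also have "\<dots> = h (u + k*P) (v + k*P)" using assms unfolding Per_def by auto
  finally show ?case using Suc by simp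
qed

lemma Per_right: assumes "Per T P h" "u + T \<le> v" shows "h u (v + k*P) = h u v"
proof (induction k)
  case 0 then show ?case by simp
next
  case (Suc k)
  have "h u (v + Suc k*P) = h u ((v + k*P) + P)" by (simp add: algebra_simps)
  also have "\<dots> = h u (v + k*P)" using assms unfolding Per_def by auto
  finally show ?case using Suc by simp
qed

lemma Per_left: assumes "Per T P h" "v + T \<le> u" shows "h (u + k*P) v = h u v"
proof (induction k)
  case 0 then show ?case by simp
next
  case (Suc k)
  have "h (u + Suc k*P) v = h ((u + k*P) + P) v" by (simp add: algebra_simps)
  also have "\<dots> = h (u + k*P) v" using assms unfolding Per_def by auto
  finally show ?case using Suc by simp
qed

lemma Per_mono: assumes "Per T P h" "T \<le> T'" "0 < k" shows "Per T' (k*P) h"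
  unfolding Per_def
proof (intro conjI allI impI)
  show "0 < k*P" using assms unfolding Per_def by simp
next
  fix u v assume "T' \<le> u" "T' \<le> v"
  then show "h (u + k*P) (v + k*P) = h u v" using Per_shift[OF assms(1)] assms(2) by simp
next
  fix u v assume "u + T' \<le> v"
  then show "h u (v + k*P) = h u v" using Per_right[OF assms(1)] assms(2) by simp
next
  fix u v assume "v + T' \<le> u"
  then show "h (u + k*P) v = h u v" using Per_left[OF assms(1)] assms(2) by simp
qed

definition red :: "nat \<Rightarrow> nat \<Rightarrow> nat \<Rightarrow> nat" where
  "red T P x = (if x < T then x else T + (x - T) mod P)"

lemma red_lt: "0 < P \<Longrightarrow> red T P x < T + P"
  by (simp add: red_def)

lemma red_0: "red T P 0 = 0"
  by (simp add: red_def)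

lemma red_Suc: assumes "0 < P" shows "red T P (Suc (red T P x)) = red T P (Suc x)"
proof (cases "x < T")
  case True then show ?thesis by (simp add: red_def)
next
  case False
  then have "Suc x - T = Suc (x - T)" by simp
  then show ?thesis using False by (simp add: red_def mod_Suc_eq)
qed

lemma red_ge: assumes "T \<le> x" shows "T \<le> red T P x" "x = red T P x + ((x - T) div P) * P"
  using assms by (simp_all add: red_def)

lemma red_lt_id: "x < T \<Longrightarrow> red T P x = x"
  by (simp add: red_def)

lemma h_red_diag: assumes "Per T P h" shows "h a (a + d) = h (red T P a) (red T P a + red T P d)"
proof -
  have 1: "h a (a + d) = h (red T P a) (red T P a + d)"
  proof (cases "a < T")
    case True then show ?thesis by (simp add: red_lt_id)
  next
    case False
    let ?k = "(a - T) div P"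
    have ge: "T \<le> red T P a" and eq: "a = red T P a + ?k * P" using red_ge[of T a P] False by auto
    have "h (red T P a + ?k*P) (red T P a + d + ?k*P) = h (red T P a) (red T P a + d)"
      using Per_shift[OF assms ge, of "red T P a + d"] ge by simp
    moreover have "a + d = red T P a + d + ?k*P" using eq by simp
    ultimately show ?thesis using eq by metis
  qed
  have 2: "h b (b + d) = h b (b + red T P d)" for b
  proof (cases "d < T")
    case True then show ?thesis by (simp add: red_lt_id)
  next
    case False
    let ?k = "(d - T) div P"
    have ge: "T \<le> red T P d" and eq: "d = red T P d + ?k * P" using red_ge[of T d P] False by auto
    have "h b (b + red T P d + ?k*P) = h b (b + red T P d)"
      using Per_right[OF assms, of b "b + red T P d"] ge by simp
    moreover have "b + d = b + red T P d + ?k*P" using eq by simp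
    ultimately show ?thesis by metis
  qed
  show ?thesis using 1 2 by simp
qed

lemma h_red_diag2: assumes "Per T P h" shows "h (a + d) a = h (red T P a + red T P d) (red T P a)"
proof -
  have "Per T P (\<lambda>x y. h y x)" using assms unfolding Per_def by auto
  from h_red_diag[OF this] show ?thesis by simp
qed

datatype cst = Dead | Diag nat | Up nat nat | Dn nat nat

fun cstep :: "(nat \<Rightarrow> nat) \<Rightarrow> cst \<Rightarrow> bool \<times> bool \<Rightarrow> cst" where
  "cstep r Dead x = Dead"
| "cstep r (Diag a) (True,True) = Diag (r (Suc a))"
| "cstep r (Diag a) (False,True) = Up a (r 1)"
| "cstep r (Diag a) (True,False) = Dn a (r 1)"
| "cstep r (Diag a) (False,False) = Dead"
| "cstep r (Up a b) (False,True) = Up a (r (Suc b))"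
| "cstep r (Up a b) (True,y) = Dead"
| "cstep r (Up a b) (False,False) = Dead"
| "cstep r (Dn a b) (True,False) = Dn a (r (Suc b))"
| "cstep r (Dn a b) (False,y) = Dead"
| "cstep r (Dn a b) (True,True) = Dead"

fun cacc :: "(nat \<Rightarrow> nat \<Rightarrow> bool) \<Rightarrow> cst \<Rightarrow> bool" where
  "cacc h Dead = False"
| "cacc h (Diag a) = h a a"
| "cacc h (Up a b) = h a (a+b)"
| "cacc h (Dn a b) = h (a+b) a"

definition stOf :: "(nat \<Rightarrow> nat) \<Rightarrow> nat \<Rightarrow> nat \<Rightarrow> cst" where
  "stOf r u v = (if u = v then Diag (r u) else if u < v then Up (r u) (r (v-u)) else Dn (r v) (r (u-v)))"

lemma conv_snoc1: "conv u u @ [(True,True)] = conv (Suc u) (Suc u)"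
  by (rule nth_equalityI) (auto simp: nth_append conv_nth)
lemma conv_snoc2: "u \<le> v \<Longrightarrow> conv u v @ [(False,True)] = conv u (Suc v)"
  by (rule nth_equalityI) (auto simp: nth_append conv_nth)
lemma conv_snoc3: "v \<le> u \<Longrightarrow> conv u v @ [(True,False)] = conv (Suc u) v"
  by (rule nth_equalityI) (auto simp: nth_append conv_nth)

context
  fixes r :: "nat \<Rightarrow> nat"
  assumes r0: "r 0 = 0" and rS: "\<And>x. r (Suc (r x)) = r (Suc x)"
begin

lemma fold_TT: "foldl (cstep r) (Diag (r a)) (replicate m (True,True)) = Diag (r (a+m))"
  by (induction m arbitrary: a) (simp_all add: rS)

lemma fold_FT: "foldl (cstep r) (Up a (r b)) (replicate m (False,True)) = Up a (r (b+m))"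
  by (induction m arbitrary: b) (simp_all add: rS)

lemma fold_TF: "foldl (cstep r) (Dn a (r b)) (replicate m (True,False)) = Dn a (r (b+m))"
  by (induction m arbitrary: b) (simp_all add: rS)

lemma fold_conv: "foldl (cstep r) (Diag 0) (conv u v) = stOf r u v"
proof -
  have d: "foldl (cstep r) (Diag 0) (replicate (min u v) (True,True)) = Diag (r (min u v))"
    using fold_TT[of 0 "min u v"] r0 by simp
  consider "u = v" | "u < v" | "v < u" by linarith
  then show ?thesis
  proof cases
    case 1 then show ?thesis using d by (simp add: conv_split stOf_def)
  next
    case 2
    then obtain m where m: "v - u = Suc m" by (metis Suc_diff_Suc)
    have "foldl (cstep r) (Up (r u) (r 1)) (replicate m (False,True)) = Up (r u) (r (1+m))"
      using fold_FT[of "r u" 1 m] by simp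
    then show ?thesis using d 2 m by (simp add: conv_split stOf_def min_def)
  next
    case 3
    then obtain m where m: "u - v = Suc m" by (metis Suc_diff_Suc)
    have "foldl (cstep r) (Dn (r v) (r 1)) (replicate m (True,False)) = Dn (r v) (r (1+m))"
      using fold_TF[of "r v" 1 m] by simp
    then show ?thesis using d 3 m by (simp add: conv_split stOf_def min_def)
  qed
qed

lemma fold_notdead: "foldl (cstep r) (Diag 0) w \<noteq> Dead \<Longrightarrow> \<exists>u v. w = conv u v"
proof (induction w rule: rev_induct)
  case Nil
  have "[] = conv 0 0" by (simp add: conv_def)
  then show ?case by blast
next
  case (snoc x w)
  have nd: "foldl (cstep r) (Diag 0) w \<noteq> Dead"
    using snoc.prems by (cases "foldl (cstep r) (Diag 0) w") auto
  then obtain u v where w: "w = conv u v" using snoc.IH by blast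
  have st: "foldl (cstep r) (Diag 0) w = stOf r u v" using w fold_conv by simp
  obtain x1 x2 where x: "x = (x1,x2)" by force
  consider "u = v" | "u < v" | "v < u" by linarith
  then show ?case
  proof cases
    case 1
    then show ?thesis using snoc.prems st w x conv_snoc1 conv_snoc2 conv_snoc3
      by (cases x1; cases x2) (auto simp: stOf_def)
  next
    case 2
    then show ?thesis using snoc.prems st w x conv_snoc2
      by (cases x1; cases x2) (auto simp: stOf_def)
  next
    case 3
    then show ?thesis using snoc.prems st w x conv_snoc3
      by (cases x1; cases x2) (auto simp: stOf_def)
  qed
qed

end

lemma Per_regular:
  assumes per: "Per T P h"
  shows "regular {conv u v | u v. h u v}"
proof -
  have P: "0 < P" using per by (simp add: Per_def)
  define r where "r = red T P"
  have r0: "r 0 = 0" by (simp add: r_def red_0)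
  have rS: "r (Suc (r x)) = r (Suc x)" for x using red_Suc[OF P] by (simp add: r_def)
  define N where "N = T + P"
  have rN: "r x < N" for x using red_lt[OF P] by (simp add: r_def N_def)
  define A where "A = {q. case q of Dead \<Rightarrow> True | Diag a \<Rightarrow> a < N | Up a b \<Rightarrow> a < N \<and> b < N
     | Dn a b \<Rightarrow> a < N \<and> b < N}"
  have "A \<subseteq> {Dead} \<union> Diag ` {..<N} \<union> (\<lambda>(a,b). Up a b) ` ({..<N}\<times>{..<N})
     \<union> (\<lambda>(a,b). Dn a b) ` ({..<N}\<times>{..<N})"
  proof
    fix q assume q: "q \<in> A"
    show "q \<in> {Dead} \<union> Diag ` {..<N} \<union> (\<lambda>(a,b). Up a b) ` ({..<N}\<times>{..<N})
     \<union> (\<lambda>(a,b). Dn a b) ` ({..<N}\<times>{..<N})"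
    proof (cases q)
      case (Up a b)
      then have "q \<in> (\<lambda>(a,b). Up a b) ` ({..<N}\<times>{..<N})"
        using q by (intro image_eqI[of _ _ "(a,b)"]) (auto simp: A_def)
      then show ?thesis by blast
    next
      case (Dn a b)
      then have "q \<in> (\<lambda>(a,b). Dn a b) ` ({..<N}\<times>{..<N})"
        using q by (intro image_eqI[of _ _ "(a,b)"]) (auto simp: A_def)
      then show ?thesis by blast
    qed (use q A_def in auto)
  qed
  then have finA: "finite A" by (rule finite_subset) simp
  have initA: "Diag 0 \<in> A" using rN[of 0] r0 by (simp add: A_def)
  have clA: "cstep r q x \<in> A" if "q \<in> A" for q x
  proof -
    obtain x1 x2 where x: "x = (x1,x2)" by force
    show ?thesis using that rN by (cases q; cases x1; cases x2) (auto simp: A_def x)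
  qed
  have acc: "cacc h (stOf r u v) = h u v" for u v
  proof -
    consider "u = v" | "u < v" | "v < u" by linarith
    then show ?thesis
    proof cases
      case 1 then show ?thesis using h_red_diag[OF per, of u 0] by (simp add: stOf_def r_def red_0)
    next
      case 2
      then have "v = u + (v - u)" by simp
      then show ?thesis using 2 h_red_diag[OF per, of u "v-u"] by (simp add: stOf_def r_def)
    next
      case 3
      then have "u = v + (u - v)" by simp
      then show ?thesis using 3 h_red_diag2[OF per, of v "u-v"] by (simp add: stOf_def r_def)
    qed
  qed
  have "{conv u v | u v. h u v} = {w. cacc h (foldl (cstep r) (Diag 0) w)}"
  proof (intro set_eqI iffI)
    fix w assume "w \<in> {conv u v | u v. h u v}"
    then obtain u v where "w = conv u v" "h u v" by blast
    then show "w \<in> {w. cacc h (foldl (cstep r) (Diag 0) w)}"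
      using fold_conv[OF r0 rS] acc by simp
  next
    fix w assume "w \<in> {w. cacc h (foldl (cstep r) (Diag 0) w)}"
    then have a: "cacc h (foldl (cstep r) (Diag 0) w)" by simp
    then have "foldl (cstep r) (Diag 0) w \<noteq> Dead" by auto
    then obtain u v where w: "w = conv u v" using fold_notdead[OF r0 rS] by blast
    then have "h u v" using a fold_conv[OF r0 rS] acc by simp
    then show "w \<in> {conv u v | u v. h u v}" using w by blast
  qed
  then show ?thesis using regular_by_automaton[OF finA initA clA] by simp
qed



lemma prop_rel_LL: "(Inl q, Inl q') \<in> prop_rel Q \<rho> n p \<longleftrightarrow>
   q \<in> Q - seed_set n p \<and> q' \<in> Q - seed_set n p \<and> (q, q') \<in> \<rho>"
  by (auto simp: prop_rel_def)
lemma prop_rel_RR: "(Inr (k,i), Inr (l,j)) \<in> prop_rel Q \<rho> n p \<longleftrightarrow>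
   k < n \<and> l < n \<and> 1 \<le> i \<and> 1 \<le> j \<and> prop_seed_rel \<rho> p k i l j"
  by (auto simp: prop_rel_def)
lemma prop_rel_LR: "(Inl q, Inr (k,i)) \<in> prop_rel Q \<rho> n p \<longleftrightarrow>
   q \<in> Q - seed_set n p \<and> k < n \<and> 1 \<le> i \<and> (if i = 1 then (q, p k 1) \<in> \<rho> else (q, p k 2) \<in> \<rho>)"
  by (auto simp: prop_rel_def)
lemma prop_rel_RL: "(Inr (k,i), Inl q) \<in> prop_rel Q \<rho> n p \<longleftrightarrow>
   q \<in> Q - seed_set n p \<and> k < n \<and> 1 \<le> i \<and> (if i = 1 then (p k 1, q) \<in> \<rho> else (p k 2, q) \<in> \<rho>)"
  by (auto simp: prop_rel_def)

lemma div_gap: assumes "0 < (n::nat)" "x + 2*n \<le> y" shows "x div n + 2 \<le> y div n"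
proof -
  have "(x + 2*n) div n = x div n + 2" using assms(1) by simp
  moreover have "(x + 2*n) div n \<le> y div n" using assms(2) by (rule div_le_mono)
  ultimately show ?thesis by simp
qed

lemma prop_seed_rel_shift: "prop_seed_rel \<rho> p k (Suc i) l (Suc j) = prop_seed_rel \<rho> p k i l j"
  by (auto simp: prop_seed_rel_def)

lemma prop_seed_rel_far: "i + 2 \<le> j \<Longrightarrow> prop_seed_rel \<rho> p k i l j = ((p k 1, p l 3) \<in> \<rho>)"
  by (auto simp: prop_seed_rel_def)
lemma prop_seed_rel_far2: "j + 2 \<le> i \<Longrightarrow> prop_seed_rel \<rho> p k i l j = ((p k 3, p l 1) \<in> \<rho>)"
  by (auto simp: prop_seed_rel_def)

definition pdec :: "nat list \<Rightarrow> nat \<Rightarrow> nat \<Rightarrow> nat + nat \<times> nat" where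
  "pdec qs n u = (if u < length qs then Inl (qs ! u)
     else Inr ((u - length qs) mod n, (u - length qs) div n + 1))"

lemma Per_prop_rel:
  fixes qs :: "nat list" and n :: nat and Q \<rho> p
  defines "M \<equiv> length qs"
  defines "h \<equiv> \<lambda>u v. (u < M \<or> 0 < n) \<and> (v < M \<or> 0 < n) \<and> (pdec qs n u, pdec qs n v) \<in> prop_rel Q \<rho> n p"
  shows "Per (M + 2*n + 1) (max n 1) h"
proof (cases "n = 0")
  case True
  then show ?thesis unfolding Per_def h_def by simp
next
  case False
  then have n: "0 < n" by simp
  have Pn: "max n 1 = n" using n by simp
  have dR: "pdec qs n u = Inr ((u - M) mod n, (u - M) div n + 1)" if "M \<le> u" for u
    using that by (simp add: pdec_def M_def)
  have dsh: "pdec qs n (u + n) = Inr ((u - M) mod n, Suc ((u - M) div n + 1))" if uM: "M \<le> u" for u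
  proof -
    obtain j where j: "u = M + j" using le_Suc_ex[OF uM] by blast
    show ?thesis using dR[of "u+n"] j n by (simp add: add.assoc div_add_self2)
  qed
  have inL: "(x < M \<or> 0 < n)" for x using n by simp
  have dL: "pdec qs n u = Inl (qs ! u)" if "u < M" for u
    using that by (simp add: pdec_def M_def)
  show ?thesis unfolding Per_def Pn
  proof (intro conjI allI impI)
    show "0 < n" by (rule n)
  next
    fix u v assume u: "M + 2*n + 1 \<le> u" and v: "M + 2*n + 1 \<le> v"
    have uM: "M \<le> u" and vM: "M \<le> v" using u v by auto
    have "h (u+n) (v+n) = ((pdec qs n (u+n), pdec qs n (v+n)) \<in> prop_rel Q \<rho> n p)"
      using inL unfolding h_def by simp
    also have "\<dots> = ((pdec qs n u, pdec qs n v) \<in> prop_rel Q \<rho> n p)"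
      unfolding dsh[OF uM] dsh[OF vM] dR[OF uM] dR[OF vM] prop_rel_RR prop_seed_rel_shift
      by simp
    also have "\<dots> = h u v" using inL unfolding h_def by simp
    finally show "h (u+n) (v+n) = h u v" .
  next
    fix u v assume uv: "u + (M + 2*n + 1) \<le> v"
    have vM: "M \<le> v" using uv by simp
    have j3: "(v - M) div n + 1 \<noteq> 1"
    proof -
      have "0 + 2*n \<le> v - M" using uv by simp
      from div_gap[OF n this] show ?thesis by simp
    qed
    have "h u (v+n) = ((pdec qs n u, pdec qs n (v+n)) \<in> prop_rel Q \<rho> n p)"
      using inL unfolding h_def by simp
    also have "\<dots> = ((pdec qs n u, pdec qs n v) \<in> prop_rel Q \<rho> n p)"
    proof (cases "u < M")
      case True
      show ?thesis unfolding dsh[OF vM] dR[OF vM] dL[OF True] prop_rel_LR using j3 by simp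
    next
      case False
      then have uM: "M \<le> u" by simp
      have "(u - M) + 2*n \<le> v - M" using uv by simp
      from div_gap[OF n this] have g: "(u - M) div n + 1 + 2 \<le> (v - M) div n + 1" by simp
      then have g2: "(u - M) div n + 1 + 2 \<le> Suc ((v - M) div n + 1)" by simp
      show ?thesis unfolding dsh[OF vM] dR[OF vM] dR[OF uM] prop_rel_RR
          prop_seed_rel_far[OF g] prop_seed_rel_far[OF g2] by simp
    qed
    also have "\<dots> = h u v" using inL unfolding h_def by simp
    finally show "h u (v+n) = h u v" .
  next
    fix u v assume uv: "v + (M + 2*n + 1) \<le> u"
    have uM: "M \<le> u" using uv by simp
    have j3: "(u - M) div n + 1 \<noteq> 1"
    proof -
      have "0 + 2*n \<le> u - M" using uv by simp
      from div_gap[OF n this] show ?thesis by simp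
    qed
    have "h (u+n) v = ((pdec qs n (u+n), pdec qs n v) \<in> prop_rel Q \<rho> n p)"
      using inL unfolding h_def by simp
    also have "\<dots> = ((pdec qs n u, pdec qs n v) \<in> prop_rel Q \<rho> n p)"
    proof (cases "v < M")
      case True
      show ?thesis unfolding dsh[OF uM] dR[OF uM] dL[OF True] prop_rel_RL using j3 by simp
    next
      case False
      then have vM: "M \<le> v" by simp
      have "(v - M) + 2*n \<le> u - M" using uv by simp
      from div_gap[OF n this] have g: "(v - M) div n + 1 + 2 \<le> (u - M) div n + 1" by simp
      then have g2: "(v - M) div n + 1 + 2 \<le> Suc ((u - M) div n + 1)" by simp
      show ?thesis unfolding dsh[OF uM] dR[OF uM] dR[OF vM] prop_rel_RR
          prop_seed_rel_far2[OF g] prop_seed_rel_far2[OF g2] by simp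
    qed
    also have "\<dots> = h (u) v" using inL unfolding h_def by simp
    finally show "h (u+n) v = h u v" .
  qed
qed



lemma regular_unary_init:
  "regular_unary {u. u < (M::nat) \<or> b}"
proof -
  define step where "step = (\<lambda>q (x::unit). min (Suc q) M)"
  have fold: "foldl step q (replicate m ()) = min (q + m) M" if "q \<le> M" for q m
    using that by (induction m arbitrary: q) (auto simp: step_def min_def)
  have fin: "finite {..M}" by simp
  have "regular {w. (\<lambda>q. q < M \<or> b) (foldl step 0 w)}"
    by (rule regular_by_automaton[OF fin]) (auto simp: step_def)
  moreover have "unary_word ` {u. u < M \<or> b} = {w. (\<lambda>q. q < M \<or> b) (foldl step 0 w)}"
  proof (intro set_eqI iffI)
    fix w assume "w \<in> unary_word ` {u. u < M \<or> b}"
    then obtain u where "w = replicate u ()" "u < M \<or> b" by (auto simp: unary_word_def)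
    then show "w \<in> {w. (\<lambda>q. q < M \<or> b) (foldl step 0 w)}" using fold[of 0 u] by auto
  next
    fix w :: "unit list" assume w: "w \<in> {w. (\<lambda>q. q < M \<or> b) (foldl step 0 w)}"
    have r: "w = replicate (length w) ()" by (simp add: replicate_length_same[symmetric])
    then have "length w < M \<or> b" using w fold[of 0 "length w"] by (auto simp: min_def split: if_splits)
    then show "w \<in> unary_word ` {u. u < M \<or> b}" using r by (auto simp: unary_word_def)
  qed
  ultimately show ?thesis by (simp add: regular_unary_def)
qed

lemma rhs_to_lhs:
  assumes fin: "finite Q"
    and iso: "rel_isomorphic X R (prop_carrier Q n p) (prop_rel Q \<rho> n p)"
  shows "unary_FA_presentable X R"
proof -
  define Q' where "Q' = Q - seed_set n p"
  have finQ': "finite Q'" using fin by (simp add: Q'_def)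
  define qs where "qs = sorted_list_of_set Q'"
  have dist: "distinct qs" and setqs: "set qs = Q'" using finQ' by (simp_all add: qs_def)
  define M where "M = length qs"
  define L where "L = {u. u < M \<or> 0 < n}"
  define C where "C = prop_carrier Q n p"
  define S where "S = prop_rel Q \<rho> n p"
  define dec where "dec = pdec qs n"
  have decL: "dec u = Inl (qs ! u)" if "u < M" for u using that by (simp add: dec_def pdec_def M_def)
  have decR: "dec u = Inr ((u - M) mod n, (u - M) div n + 1)" if "M \<le> u" for u
    using that by (simp add: dec_def pdec_def M_def)
  have injd: "inj_on dec L"
  proof (rule inj_onI)
    fix u v assume u: "u \<in> L" and v: "v \<in> L" and e: "dec u = dec v"
    show "u = v"
    proof (cases "u < M")
      case True
      show ?thesis
      proof (cases "v < M")
        case True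
        then show ?thesis using \<open>u < M\<close> e decL dist by (simp add: M_def nth_eq_iff_index_eq)
      next
        case False
        then show ?thesis using \<open>u < M\<close> e decL decR by simp
      qed
    next
      case False
      show ?thesis
      proof (cases "v < M")
        case True
        then show ?thesis using \<open>\<not> u < M\<close> e decL decR by simp
      next
        case False
        then have "(u - M) mod n = (v - M) mod n" "(u - M) div n = (v - M) div n"
          using \<open>\<not> u < M\<close> e decR by auto
        then have "u - M = v - M" by (metis div_mult_mod_eq)
        then show ?thesis using False \<open>\<not> u < M\<close> by simp
      qed
    qed
  qed
  have imd: "dec ` L = C"
  proof (intro set_eqI iffI)
    fix c assume "c \<in> dec ` L"
    then obtain u where u: "u \<in> L" "c = dec u" by blast
    show "c \<in> C"
    proof (cases "u < M")
      case True
      then have "qs ! u \<in> Q'" using setqs by (metis M_def nth_mem)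
      then show ?thesis using u True decL by (simp add: C_def prop_carrier_def Q'_def)
    next
      case False
      then have "0 < n" using u by (simp add: L_def)
      then show ?thesis using u False decR by (simp add: C_def prop_carrier_def)
    qed
  next
    fix c assume c: "c \<in> C"
    show "c \<in> dec ` L"
    proof (cases c)
      case (Inl q)
      then have "q \<in> set qs" using c setqs by (auto simp: C_def prop_carrier_def Q'_def)
      then obtain i where "i < M" "q = qs ! i" by (metis M_def in_set_conv_nth)
      then show ?thesis using Inl decL by (auto simp: L_def intro!: image_eqI[of _ _ i])
    next
      case (Inr ki)
      then obtain k i where ki: "c = Inr (k,i)" "k < n" "1 \<le> i"
        using c by (auto simp: C_def prop_carrier_def)
      define u where "u = M + (k + (i - 1) * n)"
      have "dec u = Inr (k, i)" using decR[of u] ki by (simp add: u_def)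
      moreover have "u \<in> L" using ki by (simp add: L_def)
      ultimately show ?thesis using ki by (metis image_eqI)
    qed
  qed
  have bd: "bij_betw dec L C" using injd imd by (simp add: bij_betw_def)
  obtain f where f: "bij_betw f X C" and frel: "\<forall>x\<in>X. \<forall>y\<in>X. (x, y) \<in> R \<longleftrightarrow> (f x, f y) \<in> S"
    using iso by (auto simp: rel_isomorphic_def C_def S_def)
  define g where "g = inv_into X f"
  have g: "bij_betw g C X" using f by (simp add: g_def bij_betw_inv_into)
  have fg: "f (g c) = c" if "c \<in> C" for c using f that by (simp add: g_def bij_betw_inv_into_right)
  define \<phi> where "\<phi> = g \<circ> dec"
  have phiL: "\<phi> ` L = X" using g imd unfolding \<phi>_def bij_betw_def by (metis image_comp)
  have phiinj: "inj_on \<phi> L" using g bd by (simp add: \<phi>_def bij_betw_def comp_inj_on)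
  have phiX: "\<phi> u \<in> X" if "u \<in> L" for u using phiL that by blast
  have relc: "(\<phi> u, \<phi> v) \<in> R \<longleftrightarrow> (dec u, dec v) \<in> S" if "u \<in> L" "v \<in> L" for u v
  proof -
    have "dec u \<in> C" "dec v \<in> C" using imd that by auto
    then show ?thesis using frel phiX[OF that(1)] phiX[OF that(2)] fg by (simp add: \<phi>_def)
  qed
  define hE where "hE = (\<lambda>u v. (u < M \<or> 0 < n) \<and> (v < M \<or> 0 < n) \<and> u = v)"
  define hR where "hR = (\<lambda>u v. (u < M \<or> 0 < n) \<and> (v < M \<or> 0 < n) \<and> (pdec qs n u, pdec qs n v) \<in> prop_rel Q \<rho> n p)"
  have KE: "{conv u v | u v. u \<in> L \<and> v \<in> L \<and> \<phi> u = \<phi> v} = {conv u v | u v. hE u v}"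
    using phiinj by (auto simp: hE_def L_def inj_on_def)
  have KR: "{conv u v | u v. u \<in> L \<and> v \<in> L \<and> (\<phi> u, \<phi> v) \<in> R} = {conv u v | u v. hR u v}"
  proof -
    have "u \<in> L \<and> v \<in> L \<and> (\<phi> u, \<phi> v) \<in> R \<longleftrightarrow> hR u v" for u v
      using relc[of u v] by (auto simp: hR_def L_def S_def dec_def)
    then show ?thesis by simp
  qed
  have perE: "Per (M+1) 1 hE" unfolding Per_def hE_def by auto
  have perR: "Per (M + 2*n + 1) (max n 1) hR" unfolding hR_def M_def by (rule Per_prop_rel)
  show ?thesis unfolding unary_FA_presentable_def
  proof (intro exI conjI)
    show "regular_unary L" unfolding L_def by (rule regular_unary_init)
    show "\<phi> ` L = X" by (rule phiL)
    show "regular {conv u v | u v. u \<in> L \<and> v \<in> L \<and> \<phi> u = \<phi> v}"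
      unfolding KE by (rule Per_regular[OF perE])
    show "regular {conv u v | u v. u \<in> L \<and> v \<in> L \<and> (\<phi> u, \<phi> v) \<in> R}"
      unfolding KR by (rule Per_regular[OF perR])
  qed
qed



locale LR =
  fixes X :: "'a set" and R :: "('a \<times> 'a) set" and L :: "nat set" and \<phi> :: "nat \<Rightarrow> 'a"
    and T P :: nat
  assumes po: "partial_order_on X R"
    and img: "\<phi> ` L = X"
    and perE: "Per T P (\<lambda>u v. u \<in> L \<and> v \<in> L \<and> \<phi> u = \<phi> v)"
    and perR: "Per T P (\<lambda>u v. u \<in> L \<and> v \<in> L \<and> (\<phi> u, \<phi> v) \<in> R)"
    and PT: "T \<le> P"
begin

definition E where "E u v \<longleftrightarrow> u \<in> L \<and> v \<in> L \<and> \<phi> u = \<phi> v"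
definition Rl where "Rl u v \<longleftrightarrow> u \<in> L \<and> v \<in> L \<and> (\<phi> u, \<phi> v) \<in> R"
definition c where "c r i = T + r + i*P"

lemma perE': "Per T P E" using perE by (simp add: E_def[abs_def])
lemma perR': "Per T P Rl" using perR by (simp add: Rl_def[abs_def])

lemma P0: "0 < P" using perE by (simp add: Per_def)

lemma E_sym: "E u v \<Longrightarrow> E v u" by (auto simp: E_def)
lemma E_trans: "E u v \<Longrightarrow> E v w \<Longrightarrow> E u w" by (auto simp: E_def)
lemma E_refl: "u \<in> L \<Longrightarrow> E u u" by (auto simp: E_def)
lemma E_L: "E u v \<Longrightarrow> u \<in> L \<and> v \<in> L" by (auto simp: E_def)

lemma c_add: "c r (i + k) = c r i + k*P" by (simp add: c_def algebra_simps)
lemma c_ge: "T \<le> c r i" by (simp add: c_def)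

lemma G1: assumes "Per T P h" "m \<le> i" "m \<le> j"
  shows "h (c r i) (c r' j) = h (c r (i - m)) (c r' (j - m))"
proof -
  have "h (c r (i - m) + m*P) (c r' (j - m) + m*P) = h (c r (i - m)) (c r' (j - m))"
    using Per_shift[OF assms(1) c_ge c_ge] .
  moreover have "c r i = c r (i - m) + m*P" "c r' j = c r' (j - m) + m*P"
    using assms c_add[of r "i-m" m] c_add[of r' "j-m" m] by simp_all
  ultimately show ?thesis by simp
qed

lemma Gr: assumes "Per T P h" "c r i + T \<le> c r' j" "j \<le> j'"
  shows "h (c r i) (c r' j') = h (c r i) (c r' j)"
proof -
  have "c r' j' = c r' j + (j' - j)*P" using c_add[of r' j "j'-j"] assms(3) by simp
  then show ?thesis using Per_right[OF assms(1) assms(2)] by simp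
qed

lemma Gl: assumes "Per T P h" "c r' j + T \<le> c r i" "i \<le> i'"
  shows "h (c r i') (c r' j) = h (c r i) (c r' j)"
proof -
  have "c r i' = c r i + (i' - i)*P" using c_add[of r i "i'-i"] assms(3) by simp
  then show ?thesis using Per_left[OF assms(1) assms(2)] by simp
qed

lemma far1: assumes "r < P" "i + 2 \<le> j" shows "c r i + T \<le> c r' j"
proof -
  have "(i + 2) * P \<le> j * P" using assms(2) mult_le_mono1 by blast
  then show ?thesis using assms(1) PT by (simp add: c_def algebra_simps)
qed

lemma far0: assumes "i + 1 \<le> j" shows "c r i + T \<le> c r j"
proof -
  have "(i + 1) * P \<le> j * P" using assms mult_le_mono1 by blast
  then show ?thesis using PT by (simp add: c_def algebra_simps)
qed

lemma c_inj: assumes "r < P" "r' < P" "c r i = c r' j" shows "r = r' \<and> i = j"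
proof -
  have e: "r + i*P = r' + j*P" using assms(3) by (simp add: c_def)
  have "(r + i*P) mod P = r" "(r' + j*P) mod P = r'" using assms(1,2) by simp_all
  then have "r = r'" using e by simp
  moreover have "i = j" using e \<open>r = r'\<close> P0 by simp
  ultimately show ?thesis by simp
qed

lemma c_decomp: assumes "T \<le> u" shows "u = c ((u - T) mod P) ((u - T) div P)" "(u - T) mod P < P"
proof -
  have "(u - T) div P * P + (u - T) mod P = u - T" by (rule div_mult_mod_eq)
  then show "u = c ((u - T) mod P) ((u - T) div P)" using assms by (simp add: c_def)
  show "(u - T) mod P < P" using P0 by simp
qed

lemma L_per: "T \<le> u \<Longrightarrow> (u + k*P \<in> L) = (u \<in> L)"
  using Per_shift[OF perE', of u u k] by (simp add: E_def)

lemma c_L: "(c r i \<in> L) = (c r 0 \<in> L)"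
  using L_per[of "c r 0" i] c_add[of r 0 i] by (simp add: c_def)

lemma canon: assumes "Per T P h" "r < P" "r' < P"
  shows "a = b \<Longrightarrow> h (c r a) (c r' b) = h (c r 0) (c r' 0)"
    and "b = a + 1 \<Longrightarrow> h (c r a) (c r' b) = h (c r 0) (c r' 1)"
    and "a = b + 1 \<Longrightarrow> h (c r a) (c r' b) = h (c r 1) (c r' 0)"
    and "a + 2 \<le> b \<Longrightarrow> h (c r a) (c r' b) = h (c r 0) (c r' 2)"
    and "b + 2 \<le> a \<Longrightarrow> h (c r a) (c r' b) = h (c r 2) (c r' 0)"
proof -
  show "a = b \<Longrightarrow> h (c r a) (c r' b) = h (c r 0) (c r' 0)" using G1[OF assms(1), of a a b r r'] by simp
  show "b = a + 1 \<Longrightarrow> h (c r a) (c r' b) = h (c r 0) (c r' 1)" using G1[OF assms(1), of a a b r r'] by simp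
  show "a = b + 1 \<Longrightarrow> h (c r a) (c r' b) = h (c r 1) (c r' 0)" using G1[OF assms(1), of b a b r r'] by simp
  show "a + 2 \<le> b \<Longrightarrow> h (c r a) (c r' b) = h (c r 0) (c r' 2)"
  proof -
    assume ab: "a + 2 \<le> b"
    have "h (c r a) (c r' b) = h (c r 0) (c r' (b - a))" using G1[OF assms(1), of a a b r r'] ab by simp
    also have "\<dots> = h (c r 0) (c r' 2)" using Gr[OF assms(1) far1[OF assms(2), of 0 2 r'], of "b-a"] ab by simp
    finally show ?thesis .
  qed
  show "b + 2 \<le> a \<Longrightarrow> h (c r a) (c r' b) = h (c r 2) (c r' 0)"
  proof -
    assume ab: "b + 2 \<le> a"
    have "h (c r a) (c r' b) = h (c r (a - b)) (c r' 0)" using G1[OF assms(1), of b a b r r'] ab by simp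
    also have "\<dots> = h (c r 2) (c r' 0)" using Gl[OF assms(1) far1[OF assms(3), of 0 2 r], of "a-b"] ab by simp
    finally show ?thesis .
  qed
qed

definition good where "good r \<longleftrightarrow> r < P \<and> c r 0 \<in> L \<and> \<not> E (c r 0) (c r 1)"
definition same where "same r' r \<longleftrightarrow> good r' \<and> E (c r' 0) (c r 0)"
definition earlier where "earlier r' r \<longleftrightarrow> good r' \<and> E (c r' 0) (c r 1)"
definition rep where "rep r \<longleftrightarrow> good r \<and> (\<forall>r'. \<not> earlier r' r) \<and> (\<forall>r'<r. \<not> same r' r)"

lemma good_neq: assumes "good r" "i \<noteq> j" shows "\<not> E (c r i) (c r j)"
proof
  assume e: "E (c r i) (c r j)"
  have g: "\<not> E (c r 0) (c r 1)" "r < P" using assms(1) by (auto simp: good_def)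
  have key: "\<not> E (c r a) (c r b)" if "a < b" for a b
  proof -
    have "E (c r a) (c r b) = E (c r 0) (c r (b - a))" using G1[OF perE', of a a b r r] that by simp
    also have "\<dots> = E (c r 0) (c r 1)" using Gr[OF perE' far0[of 0 1 r], of "b - a"] that by simp
    finally show ?thesis using g by simp
  qed
  show False
  proof (cases "i < j")
    case True then show ?thesis using key e by blast
  next
    case False then have "j < i" using assms(2) by simp
    then show ?thesis using key E_sym[OF e] by blast
  qed
qed

lemma K1: assumes "good r" "good r'" "i + 2 \<le> j" shows "\<not> E (c r i) (c r' j)"
proof
  assume e: "E (c r i) (c r' j)"
  have "r < P" using assms(1) by (simp add: good_def)
  have "E (c r i) (c r' (j+1)) = E (c r i) (c r' j)"
    using Gr[OF perE' far1[OF \<open>r < P\<close> assms(3)], of "j+1"] by simp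
  then have e2: "E (c r i) (c r' (j+1))" using e by simp
  have "E (c r' j) (c r' (j+1))" by (rule E_trans[OF E_sym[OF e] e2])
  then show False using good_neq[OF assms(2), of j "j+1"] by simp
qed

lemma K1': assumes "good r" "good r'" "j + 2 \<le> i" shows "\<not> E (c r i) (c r' j)"
proof
  assume "E (c r i) (c r' j)"
  then have "E (c r' j) (c r i)" by (rule E_sym)
  then show False using K1[OF assms(2,1,3)] by simp
qed

lemma rep_good: "rep r \<Longrightarrow> good r" by (simp add: rep_def)
lemma good_P: "good r \<Longrightarrow> r < P" by (simp add: good_def)

lemma K2: assumes "rep r" "rep r'" "E (c r i) (c r' j)" shows "r = r' \<and> i = j"
proof -
  have gr: "good r" and gr': "good r'" using assms by (auto simp: rep_def)
  have P: "r < P" "r' < P" using gr gr' by (auto simp: good_def)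
  consider "i = j" | "j = i + 1" | "i = j + 1" | "i + 2 \<le> j" | "j + 2 \<le> i" by linarith
  then show ?thesis
  proof cases
    case 1
    have e: "E (c r 0) (c r' 0)" using assms(3) canon(1)[OF perE' P 1] by simp
    have "r = r'"
    proof (rule ccontr)
      assume "r \<noteq> r'"
      then consider "r < r'" | "r' < r" by linarith
      then show False
      proof cases
        case 1
        have "same r r'" using gr e by (simp add: same_def)
        moreover have "\<not> same r r'" using assms(2) 1 unfolding rep_def by blast
        ultimately show False by contradiction
      next
        case 2
        have "same r' r" using gr' E_sym[OF e] by (simp add: same_def)
        moreover have "\<not> same r' r" using assms(1) 2 unfolding rep_def by blast
        ultimately show False by contradiction
      qed
    qed
    then show ?thesis using 1 by simp
  next
    case 2
    have "E (c r 0) (c r' 1)" using assms(3) canon(2)[OF perE' P 2] by simp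
    then have "earlier r r'" using gr by (simp add: earlier_def)
    moreover have "\<not> earlier r r'" using assms(2) unfolding rep_def by blast
    ultimately show ?thesis by contradiction
  next
    case 3
    have "E (c r 1) (c r' 0)" using assms(3) canon(3)[OF perE' P 3] by simp
    then have "earlier r' r" using gr' E_sym by (simp add: earlier_def)
    moreover have "\<not> earlier r' r" using assms(1) unfolding rep_def by blast
    ultimately show ?thesis by contradiction
  next
    case 4 then show ?thesis using K1[OF gr gr' 4] assms(3) by simp
  next
    case 5 then show ?thesis using K1'[OF gr gr' 5] assms(3) by simp
  qed
qed

lemma K4: assumes "r < P" "c r 0 \<in> L" "\<not> good r" shows "E (c r i) (c r 0)"
proof (cases "i = 0")
  case True then show ?thesis using assms E_refl by simp
next
  case False
  have e: "E (c r 0) (c r 1)" using assms by (simp add: good_def)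
  have "E (c r 0) (c r i) = E (c r 0) (c r 1)" using Gr[OF perE' far0[of 0 1 r], of i] False by simp
  then show ?thesis using e E_sym by simp
qed

lemma shift_up: "E (c r a) (c r' b) \<Longrightarrow> E (c r (a + k)) (c r' (b + k))"
  using G1[OF perE', of k "a+k" "b+k" r r'] by simp

lemma K3: assumes "good r"
  shows "\<exists>r1. rep r1 \<and> ((\<forall>i. E (c r i) (c r1 i)) \<or> (\<forall>i. E (c r (i+1)) (c r1 i)))"
proof (cases "\<exists>r'. earlier r' r")
  case True
  define r1 where "r1 = (LEAST r'. earlier r' r)"
  obtain r0 where "earlier r0 r" using True by blast
  then have e1: "earlier r1 r" unfolding r1_def by (rule LeastI)
  have g1: "good r1" and E1: "E (c r1 0) (c r 1)" using e1 by (auto simp: earlier_def)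
  have "rep r1" unfolding rep_def
  proof (intro conjI allI impI notI)
    show "good r1" by (rule g1)
  next
    fix r2 assume "earlier r2 r1"
    then have g2: "good r2" and E2: "E (c r2 0) (c r1 1)" by (auto simp: earlier_def)
    have "E (c r1 (0+1)) (c r (1+1))" by (rule shift_up[OF E1])
    then have "E (c r1 1) (c r 2)" by (simp add: numeral_2_eq_2)
    then have "E (c r2 0) (c r 2)" using E2 E_trans by blast
    then show False using K1[OF g2 assms, of 0 2] by simp
  next
    fix r2 assume "r2 < r1" "same r2 r1"
    then have "earlier r2 r" using E1 E_trans by (auto simp: same_def earlier_def)
    then show False using \<open>r2 < r1\<close> not_less_Least r1_def by blast
  qed
  moreover have "\<forall>i. E (c r (i+1)) (c r1 i)"
  proof
    fix i
    have "E (c r1 (0+i)) (c r (1+i))" by (rule shift_up[OF E1])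
    then show "E (c r (i+1)) (c r1 i)" using E_sym by (simp add: add.commute)
  qed
  ultimately show ?thesis by blast
next
  case False
  have ex: "same r r" using assms E_refl by (simp add: same_def good_def)
  define r1 where "r1 = (LEAST r'. same r' r)"
  have s1: "same r1 r" unfolding r1_def using ex by (rule LeastI)
  have g1: "good r1" and E1: "E (c r1 0) (c r 0)" using s1 by (auto simp: same_def)
  have "rep r1" unfolding rep_def
  proof (intro conjI allI impI notI)
    show "good r1" by (rule g1)
  next
    fix r2 assume "earlier r2 r1"
    then have g2: "good r2" and E2: "E (c r2 0) (c r1 1)" by (auto simp: earlier_def)
    have "E (c r1 (0+1)) (c r (0+1))" by (rule shift_up[OF E1])
    then have "E (c r1 1) (c r 1)" by simp
    then have "earlier r2 r" using E2 E_trans g2 by (auto simp: earlier_def)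
    then show False using False by blast
  next
    fix r2 assume "r2 < r1" "same r2 r1"
    then have "same r2 r" using E1 E_trans by (auto simp: same_def)
    then show False using \<open>r2 < r1\<close> not_less_Least r1_def by blast
  qed
  moreover have "\<forall>i. E (c r i) (c r1 i)"
  proof
    fix i
    have "E (c r1 (0+i)) (c r (0+i))" by (rule shift_up[OF E1])
    then show "E (c r i) (c r1 i)" using E_sym by simp
  qed
  ultimately show ?thesis by blast
qed

end


context LR begin

definition RS where "RS = {r. r < P \<and> rep r}"
definition nn where "nn = card RS"
definition rk where "rk k = sorted_list_of_set RS ! k"
definition pp where "pp k i = c (rk k) (i+1)"
definition seedE where "seedE u \<longleftrightarrow> (\<exists>k<nn. \<exists>i\<ge>1. E u (pp k i))"
definition Fin0 where "Fin0 = {u \<in> L. u < T + 2*P \<and> \<not> seedE u}"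
definition Qp where "Qp = {u \<in> Fin0. \<forall>u'\<in>Fin0. u' < u \<longrightarrow> \<not> E u' u}"
definition QQ where "QQ = Qp \<union> seed_set nn pp"
definition rho where "rho = {(u,v). u \<in> QQ \<and> v \<in> QQ \<and> (\<phi> u, \<phi> v) \<in> R}"

lemma finRS: "finite RS" by (simp add: RS_def)

lemma rk_RS: "k < nn \<Longrightarrow> rk k \<in> RS"
  using finRS by (simp add: rk_def nn_def) (metis nth_mem set_sorted_list_of_set length_sorted_list_of_set)

lemma rk_inj: "k < nn \<Longrightarrow> l < nn \<Longrightarrow> rk k = rk l \<Longrightarrow> k = l"
  using finRS by (simp add: rk_def nn_def nth_eq_iff_index_eq)

lemma rk_surj: assumes "r \<in> RS" shows "\<exists>k<nn. rk k = r"
proof -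
  have "r \<in> set (sorted_list_of_set RS)" using assms finRS by simp
  then show ?thesis unfolding rk_def nn_def by (metis in_set_conv_nth length_sorted_list_of_set)
qed

lemma rk_rep: "k < nn \<Longrightarrow> rep (rk k)" using rk_RS by (simp add: RS_def)
lemma rk_good: "k < nn \<Longrightarrow> good (rk k)" using rk_rep rep_good by blast
lemma rk_P: "k < nn \<Longrightarrow> rk k < P" using rk_RS by (simp add: RS_def)

lemma good_L: "good r \<Longrightarrow> c r i \<in> L" using c_L[of r i] by (simp add: good_def)

lemma pp_L: "k < nn \<Longrightarrow> pp k i \<in> L" using good_L rk_good by (simp add: pp_def)

lemma pp_ge: assumes "1 \<le> i" shows "T + 2*P \<le> pp k i"
proof -
  have "1*P \<le> i*P" using assms by (rule mult_le_mono1)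
  then show ?thesis unfolding pp_def c_def distrib_right by linarith
qed

lemma pp_inj: assumes "k < nn" "l < nn" "pp k i = pp l j" shows "k = l \<and> i = j"
  using c_inj[OF rk_P[OF assms(1)] rk_P[OF assms(2)]] assms rk_inj by (auto simp: pp_def)

lemma E_pp: assumes "k < nn" "l < nn" "E (pp k i) (pp l j)" shows "k = l \<and> i = j"
  using K2[OF rk_rep[OF assms(1)] rk_rep[OF assms(2)]] assms rk_inj by (auto simp: pp_def)

lemma seed_set_eq: "seed_set nn pp = {pp k i | k i. k < nn \<and> 1 \<le> i \<and> i \<le> 5}"
proof (intro set_eqI iffI)
  fix x assume "x \<in> seed_set nn pp"
  then obtain k i where "x = pp k i" "k < nn" "1 \<le> i" "i \<le> 5" by (auto simp: seed_set_def)
  then show "x \<in> {pp k i | k i. k < nn \<and> 1 \<le> i \<and> i \<le> 5}" by blast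
next
  fix x assume "x \<in> {pp k i | k i. k < nn \<and> 1 \<le> i \<and> i \<le> 5}"
  then obtain k i where "x = pp k i" "k < nn" "1 \<le> i" "i \<le> 5" by blast
  then show "x \<in> seed_set nn pp" unfolding seed_set_def by (auto intro!: image_eqI[of _ _ "(k,i)"])
qed

lemma Fin0_fin: "finite Fin0" by (rule finite_subset[of _ "{..<T+2*P}"]) (auto simp: Fin0_def)
lemma Qp_Fin0: "Qp \<subseteq> Fin0" by (auto simp: Qp_def)
lemma Qp_L: "q \<in> Qp \<Longrightarrow> q \<in> L \<and> q < T + 2*P \<and> \<not> seedE q" by (auto simp: Qp_def Fin0_def)

lemma Qp_seed_disj: "Qp \<inter> seed_set nn pp = {}"
proof (rule ccontr)
  assume "Qp \<inter> seed_set nn pp \<noteq> {}"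
  then obtain x k i where "x \<in> Qp" "x = pp k i" "1 \<le> i" by (auto simp: seed_set_eq)
  then show False using pp_ge[of i k] Qp_L[of x] by simp
qed

lemma QQ_minus: "QQ - seed_set nn pp = Qp"
  using Qp_seed_disj by (auto simp: QQ_def)

lemma finQQ: "finite QQ"
proof -
  have "finite Qp" using Fin0_fin Qp_Fin0 finite_subset by blast
  moreover have "finite (seed_set nn pp)" by (simp add: seed_set_def)
  ultimately show ?thesis by (simp add: QQ_def)
qed

lemma QQ_L: "u \<in> QQ \<Longrightarrow> u \<in> L"
  using Qp_L pp_L by (auto simp: QQ_def seed_set_eq)

lemma inj_QQ: assumes "u \<in> QQ" "v \<in> QQ" "E u v" shows "u = v"
proof -
  have qq: "u = v" if "u \<in> Qp" "v \<in> Qp" "E u v" for u v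
  proof (rule ccontr)
    assume "u \<noteq> v"
    then consider "u < v" | "v < u" by linarith
    then show False
    proof cases
      case 1 then show False using that Qp_Fin0 by (auto simp: Qp_def)
    next
      case 2 then show False using that Qp_Fin0 E_sym by (auto simp: Qp_def)
    qed
  qed
  have qs: False if "u \<in> Qp" "k < nn" "1 \<le> i" "E u (pp k i)" for u k i
    using that Qp_L by (auto simp: seedE_def)
  show ?thesis
  proof (cases "u \<in> Qp")
    case True
    show ?thesis
    proof (cases "v \<in> Qp")
      case True then show ?thesis using qq \<open>u \<in> Qp\<close> assms by blast
    next
      case False
      then obtain k i where "v = pp k i" "k < nn" "1 \<le> i" using assms(2) by (auto simp: QQ_def seed_set_eq)
      then show ?thesis using qs[of u k i] True assms by blast
    qed
  next
    case False
    then obtain k i where ki: "u = pp k i" "k < nn" "1 \<le> i" using assms(1) by (auto simp: QQ_def seed_set_eq)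
    show ?thesis
    proof (cases "v \<in> Qp")
      case True then show ?thesis using qs[of v k i] ki assms E_sym by blast
    next
      case False
      then obtain l j where "v = pp l j" "l < nn" using assms(2) by (auto simp: QQ_def seed_set_eq)
      then show ?thesis using E_pp[of k l i j] ki assms by auto
    qed
  qed
qed

lemma small_or_seed: assumes "u \<in> L" "\<not> seedE u" shows "\<exists>u'\<in>L. u' < T + 2*P \<and> E u u'"
proof (cases "u < T + 2*P")
  case True then show ?thesis using assms E_refl by blast
next
  case False
  then have Tu: "T \<le> u" by simp
  define r where "r = (u - T) mod P"
  define j where "j = (u - T) div P"
  have u: "u = c r j" and rP: "r < P" using c_decomp[OF Tu] by (simp_all add: r_def j_def)
  have j2: "2 \<le> j"
  proof (rule ccontr)
    assume "\<not> 2 \<le> j"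
    then have "j \<le> 1" by simp
    then have "j*P \<le> 1*P" by (rule mult_le_mono1)
    then show False using False u rP unfolding c_def by linarith
  qed
  have rL: "c r 0 \<in> L" using assms(1) u c_L[of r j] by simp
  have c1: "c r' 1 < T + 2*P" if "r' < P" for r' using that by (simp add: c_def)
  show ?thesis
  proof (cases "good r")
    case False
    have "E u (c r 0)" using K4[OF rP rL False] u by simp
    moreover have "c r 0 < T + 2*P" using rP by (simp add: c_def)
    ultimately show ?thesis using rL by blast
  next
    case True
    obtain r1 where r1: "rep r1" and cov: "(\<forall>i. E (c r i) (c r1 i)) \<or> (\<forall>i. E (c r (i+1)) (c r1 i))"
      using K3[OF True] by blast
    have "r1 \<in> RS" using r1 good_P[OF rep_good[OF r1]] by (simp add: RS_def)
    then obtain k where k: "k < nn" "rk k = r1" using rk_surj by blast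
    show ?thesis
    proof (cases "\<forall>i. E (c r i) (c r1 i)")
      case True
      then have "E u (pp k (j - 1))" using u k j2 by (simp add: pp_def)
      then have "seedE u" using k j2 unfolding seedE_def by (intro exI[of _ k] conjI exI[of _ "j - 1"]) auto
      then show ?thesis using assms by simp
    next
      case False
      then have cov2: "\<forall>i. E (c r (i+1)) (c r1 i)" using cov by blast
      show ?thesis
      proof (cases "j = 2")
        case True
        have "E u (c r1 1)" using cov2[rule_format, of 1] u True by (simp add: numeral_2_eq_2)
        moreover have "c r1 1 < T + 2*P" using c1 good_P[OF rep_good[OF r1]] by blast
        ultimately show ?thesis using E_L by blast
      next
        case False
        obtain m where jm: "j = m + 2" using j2 by (metis add.commute le_Suc_ex)
        have "E (c r (m+1+1)) (c r1 (m+1))" using cov2 by blast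
        then have "E u (pp k (j - 2))" using u k jm
          by (simp add: pp_def numeral_2_eq_2)
        then have "seedE u" using k j2 False unfolding seedE_def by (intro exI[of _ k] conjI exI[of _ "j - 2"]) auto
        then show ?thesis using assms by simp
      qed
    qed
  qed
qed

lemma S1: assumes "u \<in> L" shows "seedE u \<or> (\<exists>q\<in>Qp. E u q)"
proof (cases "seedE u")
  case False
  obtain u' where u': "u' \<in> L" "u' < T + 2*P" "E u u'" using small_or_seed[OF assms False] by blast
  have ns: "\<not> seedE u'"
  proof
    assume "seedE u'"
    then obtain k i where "k < nn" "1 \<le> i" "E u' (pp k i)" by (auto simp: seedE_def)
    then have "seedE u" using E_trans[OF u'(3)] by (auto simp: seedE_def)
    then show False using False by simp
  qed
  have F: "u' \<in> Fin0" using u' ns by (simp add: Fin0_def)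
  define q where "q = (LEAST x. x \<in> Fin0 \<and> E x u')"
  have qF: "q \<in> Fin0 \<and> E q u'" unfolding q_def by (rule LeastI[of _ u']) (use F u' E_refl in auto)
  have "q \<in> Qp"
    unfolding Qp_def
  proof (intro CollectI conjI ballI impI notI)
    show "q \<in> Fin0" using qF by simp
  next
    fix u'' assume "u'' \<in> Fin0" "u'' < q" "E u'' q"
    then have "u'' \<in> Fin0 \<and> E u'' u'" using qF E_trans by blast
    then show False using \<open>u'' < q\<close> not_less_Least q_def by blast
  qed
  moreover have "E u q" using qF u'(3) E_sym E_trans by blast
  ultimately show ?thesis by blast
qed simp

end


context LR begin

lemma class_fw: assumes "Per T P h" "a < b" shows "h (c r a) (c r b) = h (c r 0) (c r 1)"
proof -
  have "h (c r a) (c r b) = h (c r 0) (c r (b - a))" using G1[OF assms(1), of a a b r r] assms(2) by simp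
  also have "\<dots> = h (c r 0) (c r 1)" using Gr[OF assms(1) far0[of 0 1 r], of "b - a"] assms(2) by simp
  finally show ?thesis .
qed

lemma class_bw: assumes "Per T P h" "a < b" shows "h (c r b) (c r a) = h (c r 1) (c r 0)"
proof -
  have "h (c r b) (c r a) = h (c r (b - a)) (c r 0)" using G1[OF assms(1), of a b a r r] assms(2) by simp
  also have "\<dots> = h (c r 1) (c r 0)" using Gl[OF assms(1) far0[of 0 1 r], of "b - a"] assms(2) by simp
  finally show ?thesis .
qed

lemma pp_QQ: "k < nn \<Longrightarrow> 1 \<le> i \<Longrightarrow> i \<le> 5 \<Longrightarrow> pp k i \<in> QQ"
  by (auto simp: QQ_def seed_set_eq)

lemma rho_iff: "u \<in> QQ \<Longrightarrow> v \<in> QQ \<Longrightarrow> (u, v) \<in> rho \<longleftrightarrow> Rl u v"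
  using QQ_L by (auto simp: rho_def Rl_def)

lemma rho_sub: "rho \<subseteq> QQ \<times> QQ" by (auto simp: rho_def)

lemma seedrel: assumes "k < nn" "l < nn" "1 \<le> i" "i \<le> 5" "1 \<le> j" "j \<le> 5"
  shows "(pp k i, pp l j) \<in> rho \<longleftrightarrow> Rl (c (rk k) (i+1)) (c (rk l) (j+1))"
  using rho_iff[OF pp_QQ pp_QQ] assms by (simp add: pp_def)

lemma qrel: assumes "q \<in> Qp" "k < nn" "2 \<le> i"
  shows "Rl q (pp k i) = Rl q (pp k 2)" and "Rl (pp k i) q = Rl (pp k 2) q"
proof -
  have q: "q < T + 2*P" using Qp_L[OF assms(1)] by simp
  have le: "q + T \<le> c (rk k) 3" using q PT unfolding c_def by linarith
  have e: "pp k i = c (rk k) 3 + (i - 2)*P" using c_add[of "rk k" 3 "i - 2"] assms(3) by (simp add: pp_def)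
  have e2: "pp k 2 = c (rk k) 3" by (simp add: pp_def)
  show "Rl q (pp k i) = Rl q (pp k 2)" using Per_right[OF perR' le] e e2 by simp
  show "Rl (pp k i) q = Rl (pp k 2) q" using Per_left[OF perR' le] e e2 by simp
qed

lemma foundational: "unary_FA_foundational QQ rho nn pp"
  unfolding unary_FA_foundational_def
proof (intro conjI allI impI ballI)
  show "finite QQ" by (rule finQQ)
  show "rho \<subseteq> QQ \<times> QQ" by (rule rho_sub)
  show "seed_set nn pp \<subseteq> QQ" by (auto simp: QQ_def)
  show "inj_on (\<lambda>(k, i). pp k i) ({..<nn} \<times> {1..5})"
    by (rule inj_onI) (auto dest: pp_inj)
next
  fix k l assume kl: "k < nn" "l < nn"
  define r where "r = rk k"
  define r' where "r' = rk l"
  have P: "r < P" "r' < P" using rk_P kl by (simp_all add: r_def r'_def)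
  note sr = seedrel[OF kl, folded r_def r'_def]
  {
    fix i j :: nat assume "i \<in> {1..5}" "j \<in> {1..5}"
    then show "((pp k i, pp l i) \<in> rho) = ((pp k j, pp l j) \<in> rho)"
      using sr canon(1)[OF perR' P, of "i+1" "i+1"] canon(1)[OF perR' P, of "j+1" "j+1"] by simp
  next
    fix i j :: nat assume "i \<in> {1..4}" "j \<in> {1..4}"
    then show "((pp k i, pp l (i+1)) \<in> rho) = ((pp k j, pp l (j+1)) \<in> rho)"
      using sr canon(2)[OF perR' P, of "i+1+1" "i+1"] canon(2)[OF perR' P, of "j+1+1" "j+1"] by simp
  next
    fix i j :: nat assume "i \<in> {1..4}" "j \<in> {1..4}"
    then show "((pp k (i+1), pp l i) \<in> rho) = ((pp k (j+1), pp l j) \<in> rho)"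
      using sr canon(3)[OF perR' P, of "i+1+1" "i+1"] canon(3)[OF perR' P, of "j+1+1" "j+1"] by simp
  next
    fix i j i' j' :: nat assume "1 \<le> i \<and> i + 2 \<le> j \<and> j \<le> 5 \<and> 1 \<le> i' \<and> i' + 2 \<le> j' \<and> j' \<le> 5"
    then show "((pp k i, pp l j) \<in> rho) = ((pp k i', pp l j') \<in> rho)"
      using sr canon(4)[OF perR' P, of "i+1" "j+1"] canon(4)[OF perR' P, of "i'+1" "j'+1"] by simp
  next
    fix i j i' j' :: nat assume "1 \<le> i \<and> i + 2 \<le> j \<and> j \<le> 5 \<and> 1 \<le> i' \<and> i' + 2 \<le> j' \<and> j' \<le> 5"
    then show "((pp k j, pp l i) \<in> rho) = ((pp k j', pp l i') \<in> rho)"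
      using sr canon(5)[OF perR' P, of "i+1" "j+1"] canon(5)[OF perR' P, of "i'+1" "j'+1"] by simp
  }
next
  fix k q assume k: "k < nn" and q: "q \<in> QQ - seed_set nn pp"
  have qQ: "q \<in> Qp" using q QQ_minus by simp
  have qq: "q \<in> QQ" using q by simp
  {
    fix i j :: nat assume "i \<in> {2..5}" "j \<in> {2..5}"
    then show "((q, pp k i) \<in> rho) = ((q, pp k j) \<in> rho)"
      using rho_iff[OF qq pp_QQ[OF k]] qrel(1)[OF qQ k, of i] qrel(1)[OF qQ k, of j] by simp
  next
    fix i j :: nat assume "i \<in> {2..5}" "j \<in> {2..5}"
    then show "((pp k i, q) \<in> rho) = ((pp k j, q) \<in> rho)"
      using rho_iff[OF pp_QQ[OF k] qq] qrel(2)[OF qQ k, of i] qrel(2)[OF qQ k, of j] by simp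
  }
qed

lemma po_QQ: "partial_order_on QQ rho"
proof -
  have RX: "refl_on X R" "trans R" "antisym R" "R \<subseteq> X \<times> X" using partial_order_onD[OF po] by auto
  have phiX: "\<phi> u \<in> X" if "u \<in> QQ" for u using QQ_L[OF that] img by blast
  have "refl_on QQ rho" using RX(1) phiX by (auto simp: refl_on_def rho_def)
  moreover have "trans rho" using RX(2) unfolding trans_def rho_def by blast
  moreover have "antisym rho"
  proof (rule antisymI)
    fix u v assume "(u, v) \<in> rho" "(v, u) \<in> rho"
    then have uv: "u \<in> QQ" "v \<in> QQ" "(\<phi> u, \<phi> v) \<in> R" "(\<phi> v, \<phi> u) \<in> R" by (auto simp: rho_def)
    then have "\<phi> u = \<phi> v" using RX(3) by (auto dest: antisymD)
    then show "u = v" using inj_QQ[OF uv(1,2)] QQ_L uv by (auto simp: E_def)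
  qed
  ultimately show ?thesis using rho_sub by (simp add: partial_order_on_def preorder_on_def)
qed

lemma shapes: assumes k: "k < nn"
  shows "seed_antichain rho pp k \<or> seed_ascending rho pp k \<or> seed_descending rho pp k"
proof -
  define r where "r = rk k"
  have sr: "(pp k i, pp k j) \<in> rho \<longleftrightarrow> Rl (c r (i+1)) (c r (j+1))"
    if "1 \<le> i" "i \<le> 5" "1 \<le> j" "j \<le> 5" for i j using seedrel[OF k k that] by (simp add: r_def)
  have neq: "pp k i \<noteq> pp k (i+1)" for i using pp_inj[OF k k] by fastforce
  show ?thesis
  proof (cases "Rl (c r 0) (c r 1)")
    case True
    have "seed_ascending rho pp k" unfolding seed_ascending_def
    proof (intro ballI conjI)
      fix i :: nat assume i: "i \<in> {1..4}"
      show "(pp k i, pp k (i+1)) \<in> rho" using sr[of i "i+1"] i class_fw[OF perR', of "i+1" "i+1+1" r] True by simp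
      show "pp k i \<noteq> pp k (i+1)" by (rule neq)
    qed
    then show ?thesis by blast
  next
    case F1: False
    show ?thesis
    proof (cases "Rl (c r 1) (c r 0)")
      case True
      have "seed_descending rho pp k" unfolding seed_descending_def
      proof (intro ballI conjI)
        fix i :: nat assume i: "i \<in> {1..4}"
        show "(pp k (i+1), pp k i) \<in> rho" using sr[of "i+1" i] i class_bw[OF perR', of "i+1" "i+1+1" r] True by simp
        show "pp k i \<noteq> pp k (i+1)" by (rule neq)
      qed
      then show ?thesis by blast
    next
      case F2: False
      have "seed_antichain rho pp k" unfolding seed_antichain_def
      proof (intro ballI impI)
        fix i j :: nat assume i: "i \<in> {1..5}" and j: "j \<in> {1..5}" and ne: "pp k i \<noteq> pp k j"
        then have "i \<noteq> j" by auto
        then consider "i < j" | "j < i" by linarith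
        then show "(pp k i, pp k j) \<notin> rho"
        proof cases
          case 1 then show ?thesis using sr[of i j] i j class_fw[OF perR', of "i+1" "j+1" r] F1 by simp
        next
          case 2 then show ?thesis using sr[of i j] i j class_bw[OF perR', of "j+1" "i+1" r] F2 by simp
        qed
      qed
      then show ?thesis by blast
    qed
  qed
qed

end


context LR begin

definition gg where "gg a = (case a of Inl q \<Rightarrow> \<phi> q | Inr (k,i) \<Rightarrow> \<phi> (pp k i))"

lemma CC_eq: "prop_carrier QQ nn pp = Inl ` Qp \<union> Inr ` {(k,i). k < nn \<and> 1 \<le> i}"
  by (simp add: prop_carrier_def QQ_minus)

lemma ppL2: "k < nn \<Longrightarrow> pp k i \<in> L" by (rule pp_L)

lemma gg_bij: "bij_betw gg (prop_carrier QQ nn pp) X"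
  unfolding bij_betw_def
proof
  show "inj_on gg (prop_carrier QQ nn pp)"
  proof (rule inj_onI)
    fix a b assume a: "a \<in> prop_carrier QQ nn pp" and b: "b \<in> prop_carrier QQ nn pp" and e: "gg a = gg b"
    show "a = b"
    proof (cases a)
      case (Inl q)
      then have q: "q \<in> Qp" using a CC_eq by auto
      show ?thesis
      proof (cases b)
        case (Inl q')
        then have q': "q' \<in> Qp" using b CC_eq by auto
        have "E q q'" using e Inl \<open>a = Inl q\<close> q q' Qp_L by (simp add: gg_def E_def)
        then show ?thesis using inj_QQ[of q q'] q q' Inl \<open>a = Inl q\<close> by (simp add: QQ_def)
      next
        case (Inr ki)
        then obtain k i where ki: "b = Inr (k,i)" "k < nn" "1 \<le> i" using b CC_eq by auto
        have "E q (pp k i)" using e \<open>a = Inl q\<close> ki q Qp_L pp_L by (simp add: gg_def E_def)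
        then have "seedE q" using ki by (auto simp: seedE_def)
        then show ?thesis using Qp_L q by simp
      qed
    next
      case (Inr ki)
      then obtain k i where ki: "a = Inr (k,i)" "k < nn" "1 \<le> i" using a CC_eq by auto
      show ?thesis
      proof (cases b)
        case (Inl q)
        then have q: "q \<in> Qp" using b CC_eq by auto
        have "E q (pp k i)" using e \<open>b = Inl q\<close> ki q Qp_L pp_L by (simp add: gg_def E_def)
        then have "seedE q" using ki by (auto simp: seedE_def)
        then show ?thesis using Qp_L q by simp
      next
        case (Inr lj)
        then obtain l j where lj: "b = Inr (l,j)" "l < nn" "1 \<le> j" using b CC_eq by auto
        have "E (pp k i) (pp l j)" using e ki lj pp_L by (simp add: gg_def E_def)
        then show ?thesis using E_pp[OF ki(2) lj(2)] ki lj by simp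
      qed
    qed
  qed
next
  show "gg ` prop_carrier QQ nn pp = X"
  proof (intro set_eqI iffI)
    fix x assume "x \<in> gg ` prop_carrier QQ nn pp"
    then obtain a where a: "a \<in> prop_carrier QQ nn pp" "x = gg a" by blast
    then show "x \<in> X" using img Qp_L pp_L CC_eq by (auto simp: gg_def)
  next
    fix x assume "x \<in> X"
    then obtain u where u: "u \<in> L" "x = \<phi> u" using img by blast
    from S1[OF u(1)] show "x \<in> gg ` prop_carrier QQ nn pp"
    proof
      assume "seedE u"
      then obtain k i where ki: "k < nn" "1 \<le> i" "E u (pp k i)" by (auto simp: seedE_def)
      then have "x = gg (Inr (k,i))" using u by (simp add: gg_def E_def)
      moreover have "Inr (k,i) \<in> prop_carrier QQ nn pp" using ki CC_eq by auto
      ultimately show ?thesis by blast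
    next
      assume "\<exists>q\<in>Qp. E u q"
      then obtain q where q: "q \<in> Qp" "E u q" by blast
      then have "x = gg (Inl q)" using u by (simp add: gg_def E_def)
      moreover have "Inl q \<in> prop_carrier QQ nn pp" using q CC_eq by auto
      ultimately show ?thesis by blast
    qed
  qed
qed

lemma RR_char: assumes k: "k < nn" and l: "l < nn" and i: "1 \<le> i" and j: "1 \<le> j"
  shows "prop_seed_rel rho pp k i l j \<longleftrightarrow> Rl (pp k i) (pp l j)"
proof -
  define r where "r = rk k"
  define r' where "r' = rk l"
  have P: "r < P" "r' < P" using rk_P k l by (simp_all add: r_def r'_def)
  have m11: "(pp k 1, pp l 1) \<in> rho \<longleftrightarrow> Rl (c r 0) (c r' 0)"
    using seedrel[OF k l, of 1 1] canon(1)[OF perR' P, of "1+1" "1+1"] by (simp add: r_def r'_def)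
  have m12: "(pp k 1, pp l 2) \<in> rho \<longleftrightarrow> Rl (c r 0) (c r' 1)"
    using seedrel[OF k l, of 1 2] canon(2)[OF perR' P, of "2+1" "1+1"] by (simp add: r_def r'_def)
  have m21: "(pp k 2, pp l 1) \<in> rho \<longleftrightarrow> Rl (c r 1) (c r' 0)"
    using seedrel[OF k l, of 2 1] canon(3)[OF perR' P, of "2+1" "1+1"] by (simp add: r_def r'_def)
  have m13: "(pp k 1, pp l 3) \<in> rho \<longleftrightarrow> Rl (c r 0) (c r' 2)"
    using seedrel[OF k l, of 1 3] canon(4)[OF perR' P, of "1+1" "3+1"] by (simp add: r_def r'_def)
  have m31: "(pp k 3, pp l 1) \<in> rho \<longleftrightarrow> Rl (c r 2) (c r' 0)"
    using seedrel[OF k l, of 3 1] canon(5)[OF perR' P, of "1+1" "3+1"] by (simp add: r_def r'_def)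
  have pe: "Rl (pp k i) (pp l j) = Rl (c r (i+1)) (c r' (j+1))" by (simp add: pp_def r_def r'_def)
  consider "i = j" | "j = i + 1" | "i = j + 1" | "i + 2 \<le> j" | "j + 2 \<le> i" by linarith
  then show ?thesis
  proof cases
    case 1 then show ?thesis
      using pe m11 canon(1)[OF perR' P, of "i+1" "j+1"] by (simp add: prop_seed_rel_def)
  next
    case 2 then show ?thesis
      using pe m12 canon(2)[OF perR' P, of "j+1" "i+1"] by (simp add: prop_seed_rel_def)
  next
    case 3 then show ?thesis
      using pe m21 canon(3)[OF perR' P, of "i+1" "j+1"] by (simp add: prop_seed_rel_def)
  next
    case 4 then show ?thesis
      using pe m13 canon(4)[OF perR' P, of "i+1" "j+1"] by (simp add: prop_seed_rel_def)
  next
    case 5 then show ?thesis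
      using pe m31 canon(5)[OF perR' P, of "j+1" "i+1"] by (simp add: prop_seed_rel_def)
  qed
qed

lemma gg_rel: assumes a: "a \<in> prop_carrier QQ nn pp" and b: "b \<in> prop_carrier QQ nn pp"
  shows "(a, b) \<in> prop_rel QQ rho nn pp \<longleftrightarrow> (gg a, gg b) \<in> R"
proof -
  have QQq: "q \<in> QQ" if "q \<in> Qp" for q using that by (simp add: QQ_def)
  have Rlq: "Rl u v \<longleftrightarrow> (\<phi> u, \<phi> v) \<in> R" if "u \<in> L" "v \<in> L" for u v using that by (simp add: Rl_def)
  show ?thesis
  proof (cases a)
    case (Inl q)
    then have q: "q \<in> Qp" using a CC_eq by auto
    show ?thesis
    proof (cases b)
      case (Inl q')
      then have q': "q' \<in> Qp" using b CC_eq by auto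
      show ?thesis using \<open>a = Inl q\<close> Inl q q' prop_rel_LL[of q q' QQ rho nn pp] QQ_minus
          rho_iff[OF QQq[OF q] QQq[OF q']] Rlq Qp_L by (simp add: gg_def)
    next
      case (Inr lj)
      then obtain l j where lj: "b = Inr (l,j)" "l < nn" "1 \<le> j" using b CC_eq by auto
      have e: "(q, pp l (if j = 1 then 1 else 2)) \<in> rho \<longleftrightarrow> Rl q (pp l j)"
      proof (cases "j = 1")
        case True then show ?thesis using rho_iff[OF QQq[OF q] pp_QQ[OF lj(2), of 1]] by simp
      next
        case False
        then show ?thesis using rho_iff[OF QQq[OF q] pp_QQ[OF lj(2), of 2]] qrel(1)[OF q lj(2), of j] lj by simp
      qed
      have "(a, b) \<in> prop_rel QQ rho nn pp \<longleftrightarrow> (q, pp l (if j = 1 then 1 else 2)) \<in> rho"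
        using \<open>a = Inl q\<close> lj q prop_rel_LR[of q l j QQ rho nn pp] QQ_minus by auto
      then show ?thesis using e Rlq[of q "pp l j"] Qp_L[OF q] pp_L[OF lj(2)] \<open>a = Inl q\<close> lj
        by (simp add: gg_def)
    qed
  next
    case (Inr ki)
    then obtain k i where ki: "a = Inr (k,i)" "k < nn" "1 \<le> i" using a CC_eq by auto
    show ?thesis
    proof (cases b)
      case (Inl q)
      then have q: "q \<in> Qp" using b CC_eq by auto
      have e: "(pp k (if i = 1 then 1 else 2), q) \<in> rho \<longleftrightarrow> Rl (pp k i) q"
      proof (cases "i = 1")
        case True then show ?thesis using rho_iff[OF pp_QQ[OF ki(2), of 1] QQq[OF q]] by simp
      next
        case False
        then show ?thesis using rho_iff[OF pp_QQ[OF ki(2), of 2] QQq[OF q]] qrel(2)[OF q ki(2), of i] ki by simp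
      qed
      have "(a, b) \<in> prop_rel QQ rho nn pp \<longleftrightarrow> (pp k (if i = 1 then 1 else 2), q) \<in> rho"
        using \<open>b = Inl q\<close> ki q prop_rel_RL[of k i q QQ rho nn pp] QQ_minus by auto
      then show ?thesis using e Rlq[of "pp k i" q] Qp_L[OF q] pp_L[OF ki(2)] \<open>b = Inl q\<close> ki
        by (simp add: gg_def)
    next
      case (Inr lj)
      then obtain l j where lj: "b = Inr (l,j)" "l < nn" "1 \<le> j" using b CC_eq by auto
      have "(a, b) \<in> prop_rel QQ rho nn pp \<longleftrightarrow> prop_seed_rel rho pp k i l j"
        using ki lj prop_rel_RR by simp
      then show ?thesis using RR_char[OF ki(2) lj(2) ki(3) lj(3)] Rlq pp_L ki lj by (simp add: gg_def)
    qed
  qed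
qed

lemma main:
  "\<exists>(Q::nat set) \<rho> n p.
       unary_FA_foundational_po Q \<rho> n p \<and>
       (\<forall>k<n. seed_antichain \<rho> p k \<or> seed_ascending \<rho> p k \<or> seed_descending \<rho> p k) \<and>
       rel_isomorphic X R (prop_carrier Q n p) (prop_rel Q \<rho> n p)"
proof (intro exI conjI)
  show "unary_FA_foundational_po QQ rho nn pp"
    by (simp add: unary_FA_foundational_po_def foundational po_QQ)
  show "\<forall>k<nn. seed_antichain rho pp k \<or> seed_ascending rho pp k \<or> seed_descending rho pp k"
    using shapes by blast
  define f where "f = inv_into (prop_carrier QQ nn pp) gg"
  have fb: "bij_betw f X (prop_carrier QQ nn pp)" using gg_bij by (simp add: f_def bij_betw_inv_into)
  have gf: "gg (f x) = x" if "x \<in> X" for x using gg_bij that by (simp add: f_def bij_betw_inv_into_right)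
  have fC: "f x \<in> prop_carrier QQ nn pp" if "x \<in> X" for x using fb that by (simp add: bij_betw_apply)
  show "rel_isomorphic X R (prop_carrier QQ nn pp) (prop_rel QQ rho nn pp)"
    unfolding rel_isomorphic_def
  proof (intro exI conjI ballI)
    show "bij_betw f X (prop_carrier QQ nn pp)" by (rule fb)
  next
    fix x y assume "x \<in> X" "y \<in> X"
    then show "((x, y) \<in> R) = ((f x, f y) \<in> prop_rel QQ rho nn pp)"
      using gg_rel[OF fC fC] gf by simp
  qed
qed

end


lemma conv_set_mem: "conv u v \<in> {conv u v | u v. Pr u v} \<longleftrightarrow> Pr u v"
  using conv_inj by blast

theorem theorem5p10:
  fixes X :: "'a set" and R :: "('a \<times> 'a) set"
  assumes "partial_order_on X R"
  shows "unary_FA_presentable X R \<longleftrightarrow>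
    (\<exists>(Q::nat set) \<rho> n p.
       unary_FA_foundational_po Q \<rho> n p \<and>
       (\<forall>k<n. seed_antichain \<rho> p k \<or> seed_ascending \<rho> p k \<or> seed_descending \<rho> p k) \<and>
       rel_isomorphic X R (prop_carrier Q n p) (prop_rel Q \<rho> n p))"
proof
  assume "unary_FA_presentable X R"
  then obtain L :: "nat set" and \<phi> :: "nat \<Rightarrow> 'a" where img: "\<phi> ` L = X"
    and rE: "regular {conv u v | u v. u \<in> L \<and> v \<in> L \<and> \<phi> u = \<phi> v}"
    and rR: "regular {conv u v | u v. u \<in> L \<and> v \<in> L \<and> (\<phi> u, \<phi> v) \<in> R}"
    unfolding unary_FA_presentable_def by blast
  obtain T1 P1 where p1: "Per T1 P1 (\<lambda>u v. conv u v \<in> {conv u v | u v. u \<in> L \<and> v \<in> L \<and> \<phi> u = \<phi> v})"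
    using regular_Per[OF rE] by blast
  obtain T2 P2 where p2: "Per T2 P2 (\<lambda>u v. conv u v \<in> {conv u v | u v. u \<in> L \<and> v \<in> L \<and> (\<phi> u, \<phi> v) \<in> R})"
    using regular_Per[OF rR] by blast
  have pE: "Per T1 P1 (\<lambda>u v. u \<in> L \<and> v \<in> L \<and> \<phi> u = \<phi> v)"
    using p1 by (simp only: conv_set_mem)
  have pR: "Per T2 P2 (\<lambda>u v. u \<in> L \<and> v \<in> L \<and> (\<phi> u, \<phi> v) \<in> R)"
    using p2 by (simp only: conv_set_mem)
  have P1: "0 < P1" and P2: "0 < P2" using pE pR by (simp_all add: Per_def)
  define T where "T = max T1 T2"
  define P where "P = P1 * P2 * (T + 1)"
  have eq1: "P = (P2 * (T+1)) * P1" and eq2: "P = (P1 * (T+1)) * P2" unfolding P_def by (simp_all only: mult_ac)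
  have "Per T ((P2 * (T+1)) * P1) (\<lambda>u v. u \<in> L \<and> v \<in> L \<and> \<phi> u = \<phi> v)"
    by (rule Per_mono[OF pE]) (simp_all add: T_def P2)
  then have qE: "Per T P (\<lambda>u v. u \<in> L \<and> v \<in> L \<and> \<phi> u = \<phi> v)" using eq1 by simp
  have "Per T ((P1 * (T+1)) * P2) (\<lambda>u v. u \<in> L \<and> v \<in> L \<and> (\<phi> u, \<phi> v) \<in> R)"
    by (rule Per_mono[OF pR]) (simp_all add: T_def P1)
  then have qR: "Per T P (\<lambda>u v. u \<in> L \<and> v \<in> L \<and> (\<phi> u, \<phi> v) \<in> R)" using eq2 by simp
  have "1 * 1 * (T + 1) \<le> P1 * P2 * (T + 1)" using P1 P2 by (intro mult_le_mono) simp_all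
  then have TP: "T \<le> P" by (simp add: P_def)
  interpret LR X R L \<phi> T P using assms img qE qR TP by unfold_locales
  show "\<exists>(Q::nat set) \<rho> n p.
       unary_FA_foundational_po Q \<rho> n p \<and>
       (\<forall>k<n. seed_antichain \<rho> p k \<or> seed_ascending \<rho> p k \<or> seed_descending \<rho> p k) \<and>
       rel_isomorphic X R (prop_carrier Q n p) (prop_rel Q \<rho> n p)" by (rule main)
next
  assume "\<exists>(Q::nat set) \<rho> n p.
       unary_FA_foundational_po Q \<rho> n p \<and>
       (\<forall>k<n. seed_antichain \<rho> p k \<or> seed_ascending \<rho> p k \<or> seed_descending \<rho> p k) \<and>
       rel_isomorphic X R (prop_carrier Q n p) (prop_rel Q \<rho> n p)"
  then obtain Q :: "nat set" and \<rho> n p where f: "unary_FA_foundational_po Q \<rho> n p"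
    and iso: "rel_isomorphic X R (prop_carrier Q n p) (prop_rel Q \<rho> n p)" by blast
  have "finite Q" using f by (simp add: unary_FA_foundational_po_def unary_FA_foundational_def)
  then show "unary_FA_presentable X R" using rhs_to_lhs iso by blast
qed


end
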